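(* Let $n \geq 1$ and $s \geq 1$ be integers, let $\lambda_0 \geq 0 > \lambda_1 \geq \cdots \geq \lambda_n$ be real numbers and let $z_1, \ldots, z_{2s}$ be complex numbers with $z_j = a_j + b_j i$, $a_j \in \mathbb{R}$, $b_j > 0$ for $j = 1, \ldots, 2s$. If $\lambda_0 + \sum_{j=1}^n \lambda_j - 2\sum_{j=1}^{2s} |z_j| \geq 0$, then there is an $(n+4s+1) \times (n+4s+1)$ normal centrosymmetric nonnegative matrix with eigenvalues $\lambda_0, \lambda_1, \ldots, \lambda_n, z_1, \ldots, z_{2s}, \overline{z}_1, \ldots, \overline{z}_{2s}$.
   Context: $J$ denotes the reverse identity matrix of the appropriate size (ones on the anti-diagonal, zeros elsewhere). A square matrix $Q$ is centrosymmetric if $JQJ = Q$, nonnegative if all entries are nonnegative, and normal if $QQ^* = Q^*Q$. *)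

theory Defs
  imports "Jordan_Normal_Form.Char_Poly"
begin

definition rev_id_mat :: "nat \<Rightarrow> 'a :: {zero,one} mat" where
  "rev_id_mat N = mat N N (\<lambda>(i,j). if i + j = N - 1 then 1 else 0)"

definition centrosymmetric :: "'a :: comm_ring_1 mat \<Rightarrow> bool" where
  "centrosymmetric Q \<longleftrightarrow> square_mat Q \<and>
     rev_id_mat (dim_row Q) * Q * rev_id_mat (dim_row Q) = Q"

definition nonneg_mat :: "real mat \<Rightarrow> bool" where
  "nonneg_mat Q \<longleftrightarrow> (\<forall>i < dim_row Q. \<forall>j < dim_col Q. Q $$ (i,j) \<ge> 0)"

text \<open>For a real matrix the conjugate transpose is the transpose.\<close>
definition normal_real_mat :: "real mat \<Rightarrow> bool" where
  "normal_real_mat Q \<longleftrightarrow> square_mat Q \<and> Q * transpose_mat Q = transpose_mat Q * Q"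

definition has_eigenvalue_list :: "real mat \<Rightarrow> complex list \<Rightarrow> bool" where
  "has_eigenvalue_list Q L \<longleftrightarrow>
     char_poly (map_mat complex_of_real Q) = (\<Prod>a \<leftarrow> L. [:- a, 1:])"

end

theory Submission
  imports Defs
begin


definition cm :: "'a::comm_ring_1 mat \<Rightarrow> 'a \<Rightarrow> 'a mat" where
  "cm A x = mat (dim_row A) (dim_row A) (\<lambda>(i,j). (if i = j then x else 0) - A $$ (i,j))"

lemma cm_carrier[simp]: "A \<in> carrier_mat m m \<Longrightarrow> cm A x \<in> carrier_mat m m"
  unfolding cm_def by auto

lemma dim_cm[simp]: "dim_row (cm A x) = dim_row A" "dim_col (cm A x) = dim_row A"
  unfolding cm_def by auto

lemma poly_char_poly_cm:
  assumes A: "A \<in> carrier_mat m m"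
  shows "poly (char_poly A) x = det (cm A x)"
  unfolding char_poly_def
  by (rule poly_det_cong[of _ m], insert A, auto simp: char_poly_matrix_def cm_def)

definition glue :: "'a::comm_ring_1 mat \<Rightarrow> 'a vec \<Rightarrow> 'a \<Rightarrow> 'a \<Rightarrow> 'a mat" where
  "glue A u r d = mat (dim_row A + 1) (dim_row A + 1) (\<lambda>(i,j).
     if i < dim_row A \<and> j < dim_row A then A $$ (i,j)
     else if i < dim_row A then r * u $ i
     else if j < dim_row A then r * u $ j else d)"

lemma glue_carrier[simp]: "A \<in> carrier_mat m m \<Longrightarrow> glue A u r d \<in> carrier_mat (Suc m) (Suc m)"
  unfolding glue_def by auto

lemma mult_vec_entry: 
  assumes "A \<in> carrier_mat m m" "u \<in> carrier_vec m" "i < m"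
  shows "(A *\<^sub>v u) $ i = (\<Sum>j<m. A $$ (i,j) * u $ j)"
  using assms by (auto simp: mult_mat_vec_def scalar_prod_def lessThan_atLeast0)

lemma cm_mult_col:
  fixes A :: "'a::field mat"
  assumes A: "A \<in> carrier_mat m m" and u: "u \<in> carrier_vec m" and ev: "A *\<^sub>v u = \<alpha> \<cdot>\<^sub>v u"
  shows "cm A x * mat m 1 (\<lambda>(i,_). c * u $ i) = mat m 1 (\<lambda>(i,_). c * (x - \<alpha>) * u $ i)"
proof (rule eq_matI)
  fix i j assume i: "i < dim_row (mat m 1 (\<lambda>(i,_). c * (x - \<alpha>) * u $ i))"
    and j: "j < dim_col (mat m 1 (\<lambda>(i,_). c * (x - \<alpha>) * u $ i))"
  hence i: "i < m" and j: "j = 0" by auto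
  have e: "(\<Sum>k<m. A $$ (i,k) * u $ k) = \<alpha> * u $ i"
    using mult_vec_entry[OF A u i] ev i u by simp
  have "(cm A x * mat m 1 (\<lambda>(i,_). c * u $ i)) $$ (i,j)
      = (\<Sum>k<m. ((if i = k then x else 0) - A $$ (i,k)) * (c * u $ k))"
    using A i j by (simp add: cm_def scalar_prod_def lessThan_atLeast0)
  also have "\<dots> = (\<Sum>k<m. (if i = k then x * (c * u $ k) else 0) - A $$ (i,k) * (c * u $ k))"
    by (rule sum.cong) (auto simp: left_diff_distrib)
  also have "\<dots> = (\<Sum>k<m. (if i = k then x * (c * u $ k) else 0)) - (\<Sum>k<m. A $$ (i,k) * (c * u $ k))"
    by (simp add: sum_subtractf)
  also have "\<dots> = (\<Sum>k<m. (if i = k then x * (c * u $ k) else 0)) - c * (\<Sum>k<m. A $$ (i,k) * u $ k)"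
    by (simp add: sum_distrib_left ac_simps)
  also have "\<dots> = c * (x - \<alpha>) * u $ i" using i e by (simp add: algebra_simps)
  finally show "(cm A x * mat m 1 (\<lambda>(i,_). c * u $ i)) $$ (i,j) = mat m 1 (\<lambda>(i,_). c * (x - \<alpha>) * u $ i) $$ (i,j)"
    using i j by simp
qed (use A in \<open>auto simp: cm_def\<close>)


lemma cm_glue:
  assumes A: "A \<in> carrier_mat m m"
  shows "cm (glue A u r d) x = four_block_mat (cm A x) (mat m 1 (\<lambda>(i,_). - r * u $ i))
      (mat 1 m (\<lambda>(_,j). - r * u $ j)) (mat 1 1 (\<lambda>_. x - d))"
  by (rule eq_matI, insert A, auto simp: cm_def glue_def)

lemma det_glue_eval:
  fixes A :: "'a::field mat"
  assumes A: "A \<in> carrier_mat m m" and u: "u \<in> carrier_vec m" and ev: "A *\<^sub>v u = \<alpha> \<cdot>\<^sub>v u"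
    and x: "x \<noteq> \<alpha>"
  shows "det (cm (glue A u r d) x) = det (cm A x) * ((x - d) - r * r * (u \<bullet> u) / (x - \<alpha>))"
proof -
  let ?C = "mat m 1 (\<lambda>(i,_). - r * u $ i)"
  let ?R = "mat 1 m (\<lambda>(_,j). - r * u $ j)"
  let ?D = "mat 1 1 (\<lambda>_. x - d) :: 'a mat"
  let ?L = "four_block_mat (cm A x) (0\<^sub>m m 1) ?R (1\<^sub>m 1)"
  let ?c = "- r / (x - \<alpha>)"
  let ?C' = "mat m 1 (\<lambda>(i,_). ?c * u $ i)"
  let ?D' = "mat 1 1 (\<lambda>_. (x - d) - r * r * (u \<bullet> u) / (x - \<alpha>)) :: 'a mat"
  let ?U = "four_block_mat (1\<^sub>m m) ?C' (0\<^sub>m 1 m) ?D'"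
  have cmA: "cm A x \<in> carrier_mat m m" using A by simp
  have xa: "x - \<alpha> \<noteq> 0" using x by simp
  have "?L * ?U = four_block_mat (cm A x * 1\<^sub>m m + 0\<^sub>m m 1 * 0\<^sub>m 1 m) (cm A x * ?C' + 0\<^sub>m m 1 * ?D')
       (?R * 1\<^sub>m m + 1\<^sub>m 1 * 0\<^sub>m 1 m) (?R * ?C' + 1\<^sub>m 1 * ?D')"
    by (rule mult_four_block_mat, insert cmA, auto)
  also have "cm A x * 1\<^sub>m m + 0\<^sub>m m 1 * 0\<^sub>m 1 m = cm A x" using cmA by (simp add: right_mult_one_mat)
  also have "cm A x * ?C' = mat m 1 (\<lambda>(i,_). ?c * (x - \<alpha>) * u $ i)"
    by (rule cm_mult_col[OF A u ev])
  also have "mat m 1 (\<lambda>(i,_). ?c * (x - \<alpha>) * u $ i) + 0\<^sub>m m 1 * ?D' = ?C"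
    by (rule eq_matI, insert xa, auto)
  also have "?R * 1\<^sub>m m + 1\<^sub>m 1 * 0\<^sub>m 1 m = ?R" by simp
  also have "?R * ?C' + 1\<^sub>m 1 * ?D' = ?D"
  proof (rule eq_matI)
    fix i j assume "i < dim_row ?D" "j < dim_col ?D"
    hence ij: "i = 0" "j = 0" by auto
    have "(?R * ?C') $$ (0,0) = (\<Sum>k<m. (- r * u $ k) * (?c * u $ k))"
      by (simp add: scalar_prod_def lessThan_atLeast0)
    also have "\<dots> = r * r / (x - \<alpha>) * (\<Sum>k<m. u $ k * u $ k)"
      by (simp add: sum_distrib_left algebra_simps)
    also have "(\<Sum>k<m. u $ k * u $ k) = u \<bullet> u" using u by (simp add: scalar_prod_def lessThan_atLeast0)
    finally have e: "(?R * ?C') $$ (0,0) = r * r / (x - \<alpha>) * (u \<bullet> u)" .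
    show "(?R * ?C' + 1\<^sub>m 1 * ?D') $$ (i,j) = ?D $$ (i,j)"
      using ij e by simp
  qed auto
  finally have LU: "?L * ?U = cm (glue A u r d) x" using cm_glue[OF A] by simp
  have "det (cm (glue A u r d) x) = det ?L * det ?U"
    unfolding LU[symmetric] by (rule det_mult[of _ "m+1"], insert four_block_carrier_mat[OF cmA, of "1\<^sub>m 1" 1 1] 
        four_block_carrier_mat[of "1\<^sub>m m" m m ?D' 1 1], auto)
  also have "det ?L = det (cm A x) * det (1\<^sub>m 1 :: 'a mat)"
    by (rule det_four_block_mat_upper_right_zero[OF cmA refl], auto)
  also have "det ?U = det (1\<^sub>m m :: 'a mat) * det ?D'"
    by (rule det_four_block_mat_lower_left_zero[OF _ _ refl], auto)
  also have "det ?D' = (x - d) - r * r * (u \<bullet> u) / (x - \<alpha>)"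
    by (subst det_single, auto)
  finally show ?thesis by simp
qed


lemma poly_eq_except_one:
  fixes p q :: "'a::field_char_0 poly"
  assumes "\<And>x. x \<noteq> a \<Longrightarrow> poly p x = poly q x"
  shows "p = q"
proof (rule ccontr)
  assume "p \<noteq> q"
  hence "p - q \<noteq> 0" by simp
  hence fin: "finite {x. poly (p - q) x = 0}" by (rule poly_roots_finite)
  have "UNIV - {a} \<subseteq> {x. poly (p - q) x = 0}" using assms by auto
  hence "finite (UNIV - {a} :: 'a set)" using fin finite_subset by blast
  hence "finite (UNIV :: 'a set)" by simp
  thus False using infinite_UNIV_char_0 by blast
qed

lemma glue_char_poly:
  fixes A :: "'a::field_char_0 mat"
  assumes A: "A \<in> carrier_mat m m" and u: "u \<in> carrier_vec m" and ev: "A *\<^sub>v u = \<alpha> \<cdot>\<^sub>v u"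
  shows "char_poly (glue A u r d) * [:-\<alpha>, 1:] = char_poly A * ([:-\<alpha>, 1:] * [:-d, 1:] - [: r * r * (u \<bullet> u) :])"
proof (rule poly_eq_except_one[of \<alpha>])
  fix x assume x: "x \<noteq> \<alpha>"
  have xa: "x - \<alpha> \<noteq> 0" using x by simp
  have G: "glue A u r d \<in> carrier_mat (Suc m) (Suc m)" using A by simp
  show "poly (char_poly (glue A u r d) * [:-\<alpha>, 1:]) x = poly (char_poly A * ([:-\<alpha>, 1:] * [:-d, 1:] - [: r * r * (u \<bullet> u) :])) x"
    unfolding poly_mult poly_char_poly_cm[OF G] poly_char_poly_cm[OF A] det_glue_eval[OF A u ev x]
    using xa by (simp add: field_simps)
qed



definition E :: "nat \<Rightarrow> int \<Rightarrow> complex" where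
  "E c t = cis (2 * pi * real_of_int t / real c)"

lemma E_add: "E c (a + b) = E c a * E c b"
  unfolding E_def cis_mult by (simp add: add_divide_distrib distrib_left)

lemma E_cnj: "cnj (E c t) = E c (- t)"
  unfolding E_def cis_cnj by simp

lemma E_zero[simp]: "E c 0 = 1"
  unfolding E_def by simp

lemma E_mult_c: assumes "c > 0" shows "E c (int c * m) = 1"
proof -
  have "2 * pi * real_of_int (int c * m) / real c = 2 * pi * real_of_int m"
    using assms by (simp add: field_simps)
  thus ?thesis unfolding E_def by (simp add: cis_multiple_2pi)
qed

lemma E_pow: "E c t ^ k = E c (int k * t)"
  unfolding E_def DeMoivre by (simp add: field_simps)

lemma E_neq_1: assumes c: "c > 0" and nd: "\<not> int c dvd t" shows "E c t \<noteq> 1"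
proof
  assume "E c t = 1"
  hence "cos (2 * pi * real_of_int t / real c) = 1" unfolding E_def
    by (metis cis.sel(1) one_complex.sel(1))
  then obtain n :: int where n: "2 * pi * real_of_int t / real c = real_of_int n * 2 * pi"
    using cos_one_2pi_int by blast
  hence "real_of_int t = real_of_int n * real c" using c by (simp add: field_simps)
  hence "t = n * int c" by (metis of_int_eq_iff of_int_mult of_int_of_nat_eq)
  thus False using nd by simp
qed

lemma E_sum: assumes c: "c > 0"
  shows "(\<Sum>k<c. E c (int k * t)) = (if int c dvd t then of_nat c else 0)"
proof (cases "int c dvd t")
  case True
  then obtain m where t: "t = int c * m" by blast
  have "E c (int k * t) = 1" for k
    unfolding t using E_mult_c[OF c, of "int k * m"] by (simp add: ac_simps)
  thus ?thesis using True by simp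
next
  case False
  let ?q = "E c t"
  have q1: "?q \<noteq> 1" by (rule E_neq_1[OF c False])
  have qc: "?q ^ c = 1" unfolding E_pow using E_mult_c[OF c, of t] by simp
  have "(\<Sum>k<c. E c (int k * t)) = (\<Sum>k<c. ?q ^ k)" unfolding E_pow ..
  also have "\<dots> = 0" unfolding sum_gp_strict using q1 qc by simp
  finally show ?thesis using False by simp
qed

lemma prod_list_upt_conv: fixes f :: "nat \<Rightarrow> 'a::comm_monoid_mult"
  shows "prod_list (map f [0..<n]) = prod f {..<n}"
  by (induct n) (auto simp: lessThan_Suc mult.commute)


definition Fm :: "nat \<Rightarrow> complex mat" where
  "Fm c = mat c c (\<lambda>(j,k). E c (int j * int k))"
definition Gm :: "nat \<Rightarrow> complex mat" where
  "Gm c = mat c c (\<lambda>(k,l). E c (- (int k * int l)) / of_nat c)"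
definition Dm :: "nat \<Rightarrow> (nat \<Rightarrow> complex) \<Rightarrow> complex mat" where
  "Dm c \<mu> = mat c c (\<lambda>(i,j). if i = j then \<mu> i else 0)"

lemma Fm_carrier[simp]: "Fm c \<in> carrier_mat c c" unfolding Fm_def by simp
lemma Gm_carrier[simp]: "Gm c \<in> carrier_mat c c" unfolding Gm_def by simp
lemma Dm_carrier[simp]: "Dm c \<mu> \<in> carrier_mat c c" unfolding Dm_def by simp

lemma FG: assumes c: "c > 0" shows "Fm c * Gm c = 1\<^sub>m c"
proof (rule eq_matI)
  fix i j assume "i < dim_row (1\<^sub>m c)" "j < dim_col (1\<^sub>m c)"
  hence i: "i < c" and j: "j < c" by auto
  have "(Fm c * Gm c) $$ (i,j) = (\<Sum>k<c. E c (int i * int k) * (E c (- (int k * int j)) / of_nat c))"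
    using i j by (simp add: Fm_def Gm_def scalar_prod_def lessThan_atLeast0)
  also have "\<dots> = (\<Sum>k<c. E c (int k * (int i - int j))) / of_nat c"
    by (simp add: sum_divide_distrib E_add[symmetric] algebra_simps)
  also have "\<dots> = (if i = j then 1 else 0)"
  proof -
    have "int c dvd (int i - int j) \<longleftrightarrow> i = j"
    proof
      assume "int c dvd (int i - int j)"
      then obtain q where q: "int i - int j = int c * q" by blast
      have "\<bar>int i - int j\<bar> < int c" using i j by linarith
      hence "q = 0" using q c
        by (metis abs_mult abs_of_nat dvd_imp_le_int less_irrefl of_nat_less_0_iff dvd_triv_left mult_le_0_iff zero_less_abs_iff abs_0 mult_zero_right not_less) 
      thus "i = j" using q by simp
    qed simp
    thus ?thesis unfolding E_sum[OF c] using c by simp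
  qed
  finally show "(Fm c * Gm c) $$ (i,j) = 1\<^sub>m c $$ (i,j)" using i j by simp
qed (auto simp: Fm_def Gm_def)

lemma GF: assumes c: "c > 0" shows "Gm c * Fm c = 1\<^sub>m c"
  by (rule mat_mult_left_right_inverse[OF Fm_carrier Gm_carrier FG[OF c]])

lemma FD: "Fm c * Dm c \<mu> = mat c c (\<lambda>(i,l). E c (int i * int l) * \<mu> l)"
proof (rule eq_matI)
  fix i l assume "i < dim_row (mat c c (\<lambda>(i,l). E c (int i * int l) * \<mu> l))"
    "l < dim_col (mat c c (\<lambda>(i,l). E c (int i * int l) * \<mu> l))"
  hence i: "i < c" and l: "l < c" by auto
  have "(Fm c * Dm c \<mu>) $$ (i,l) = (\<Sum>k<c. E c (int i * int k) * (if k = l then \<mu> k else 0))"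
    using i l by (simp add: Fm_def Dm_def scalar_prod_def lessThan_atLeast0)
  also have "\<dots> = E c (int i * int l) * \<mu> l"
    using l by (simp add: if_distrib cong: if_cong)
  finally show "(Fm c * Dm c \<mu>) $$ (i,l) = mat c c (\<lambda>(i,l). E c (int i * int l) * \<mu> l) $$ (i,l)"
    using i l by simp
qed (auto simp: Fm_def Dm_def)

lemma FDG_entry: assumes i: "i < c" and j: "j < c"
  shows "(Fm c * Dm c \<mu> * Gm c) $$ (i,j) = (\<Sum>k<c. \<mu> k * E c (int k * (int i - int j))) / of_nat c"
proof -
  have "(Fm c * Dm c \<mu> * Gm c) $$ (i,j) = (\<Sum>k<c. E c (int i * int k) * \<mu> k * (E c (- (int k * int j)) / of_nat c))"
    unfolding FD using i j by (simp add: Gm_def scalar_prod_def lessThan_atLeast0)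
  also have "\<dots> = (\<Sum>k<c. \<mu> k * E c (int k * (int i - int j))) / of_nat c"
    by (simp add: sum_divide_distrib E_add[symmetric] algebra_simps)
  finally show ?thesis .
qed

lemma delta2: fixes a b :: "nat \<Rightarrow> 'a::semiring_0"
  assumes "i < c"
  shows "(\<Sum>k<c. (if i = k then a k else 0) * (if k = j then b k else 0)) = (if i = j then a i * b i else 0)"
proof -
  have "(\<Sum>k<c. (if i = k then a k else 0) * (if k = j then b k else 0)) = (\<Sum>k<c. if k = i then (if i = j then a i * b i else 0) else 0)"
    by (rule sum.cong) auto
  also have "\<dots> = (if i = j then a i * b i else 0)" using assms by simp
  finally show ?thesis .
qed

lemma Dm_comm: "Dm c \<mu> * Dm c \<nu> = Dm c \<nu> * Dm c \<mu>"
proof (rule eq_matI)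
  fix i j assume "i < dim_row (Dm c \<nu> * Dm c \<mu>)" "j < dim_col (Dm c \<nu> * Dm c \<mu>)"
  hence i: "i < c" and j: "j < c" by (auto simp: Dm_def)
  have "(Dm c \<mu> * Dm c \<nu>) $$ (i,j) = (\<Sum>k<c. (if i = k then \<mu> i else 0) * (if k = j then \<nu> k else 0))"
    using i j by (simp add: Dm_def scalar_prod_def lessThan_atLeast0)
  also have "\<dots> = (\<Sum>k<c. (if i = k then \<mu> k else 0) * (if k = j then \<nu> k else 0))"
    by (rule sum.cong) auto
  also have "\<dots> = (if i = j then \<mu> i * \<nu> i else 0)" by (rule delta2[OF i])
  also have "\<dots> = (if i = j then \<nu> i * \<mu> i else 0)" by (simp add: mult.commute)
  also have "\<dots> = (\<Sum>k<c. (if i = k then \<nu> k else 0) * (if k = j then \<mu> k else 0))" by (rule delta2[OF i, symmetric])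
  also have "\<dots> = (\<Sum>k<c. (if i = k then \<nu> i else 0) * (if k = j then \<mu> k else 0))"
    by (rule sum.cong) auto
  also have "\<dots> = (Dm c \<nu> * Dm c \<mu>) $$ (i,j)"
    using i j by (simp add: Dm_def scalar_prod_def lessThan_atLeast0)
  finally show "(Dm c \<mu> * Dm c \<nu>) $$ (i,j) = (Dm c \<nu> * Dm c \<mu>) $$ (i,j)" .
qed (auto simp: Dm_def)



definition circ :: "nat \<Rightarrow> real \<Rightarrow> nat \<Rightarrow> (nat \<Rightarrow> complex) \<Rightarrow> real mat" where
  "circ c \<beta> s z = mat c c (\<lambda>(i,j). (\<beta> + 2 * (\<Sum>k\<in>{1..s}. Re (z k * E c (int k * (int i - int j))))) / real c)"

definition mu :: "nat \<Rightarrow> real \<Rightarrow> nat \<Rightarrow> (nat \<Rightarrow> complex) \<Rightarrow> nat \<Rightarrow> complex" where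
  "mu c \<beta> s z k = (if k = 0 then complex_of_real \<beta> else if k \<le> s then z k else cnj (z (c - k)))"

lemma circ_carrier[simp]: "circ c \<beta> s z \<in> carrier_mat c c" unfolding circ_def by simp

lemma split_range: "{..<2*s+1} = insert 0 ({1..s} \<union> {s+1..2*(s::nat)})" by auto

lemma sum_mu: assumes c: "c = 2 * s + 1"
  shows "(\<Sum>k<c. mu c \<beta> s z k * E c (int k * t)) =
     complex_of_real (\<beta> + 2 * (\<Sum>k\<in>{1..s}. Re (z k * E c (int k * t))))"
proof -
  have cp: "c > 0" using c by simp
  have "(\<Sum>k<c. mu c \<beta> s z k * E c (int k * t)) = mu c \<beta> s z 0 * E c 0 +
     ((\<Sum>k\<in>{1..s}. mu c \<beta> s z k * E c (int k * t)) + (\<Sum>k\<in>{s+1..2*s}. mu c \<beta> s z k * E c (int k * t)))"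
    unfolding c split_range by (subst sum.insert, auto simp: sum.union_disjoint)
  also have "(\<Sum>k\<in>{1..s}. mu c \<beta> s z k * E c (int k * t)) = (\<Sum>k\<in>{1..s}. z k * E c (int k * t))"
    by (rule sum.cong) (auto simp: mu_def)
  also have "(\<Sum>k\<in>{s+1..2*s}. mu c \<beta> s z k * E c (int k * t)) = (\<Sum>k\<in>{1..s}. mu c \<beta> s z (c - k) * E c (int (c - k) * t))"
    by (rule sum.reindex_bij_witness[of _ "\<lambda>k. c - k" "\<lambda>k. c - k"], auto simp: c)
  also have "\<dots> = (\<Sum>k\<in>{1..s}. cnj (z k * E c (int k * t)))"
  proof (rule sum.cong[OF refl])
    fix k assume k: "k \<in> {1..s}"
    have m: "mu c \<beta> s z (c - k) = cnj (z k)" using k c by (auto simp: mu_def)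
    have "E c (int (c - k) * t) = E c (int c * t) * E c (- (int k * t))"
      unfolding E_add[symmetric] using k c by (simp add: of_nat_diff algebra_simps)
    also have "\<dots> = cnj (E c (int k * t))" using E_mult_c[OF cp] by (simp add: E_cnj)
    finally show "mu c \<beta> s z (c - k) * E c (int (c - k) * t) = cnj (z k * E c (int k * t))"
      using m by simp
  qed
  also have "(\<Sum>k\<in>{1..s}. z k * E c (int k * t)) + (\<Sum>k\<in>{1..s}. cnj (z k * E c (int k * t)))
     = (\<Sum>k\<in>{1..s}. complex_of_real (2 * Re (z k * E c (int k * t))))"
    by (subst sum.distrib[symmetric]) (simp only: complex_add_cnj)
  finally show ?thesis by (simp add: mu_def of_real_sum sum_distrib_left)
qed

lemma circ_DFT: assumes c: "c = 2 * s + 1"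
  shows "map_mat complex_of_real (circ c \<beta> s z) = Fm c * Dm c (mu c \<beta> s z) * Gm c"
proof (rule eq_matI)
  fix i j assume "i < dim_row (Fm c * Dm c (mu c \<beta> s z) * Gm c)" "j < dim_col (Fm c * Dm c (mu c \<beta> s z) * Gm c)"
  hence i: "i < c" and j: "j < c" by (auto simp: Fm_def Gm_def)
  show "map_mat complex_of_real (circ c \<beta> s z) $$ (i,j) = (Fm c * Dm c (mu c \<beta> s z) * Gm c) $$ (i,j)"
    unfolding FDG_entry[OF i j] sum_mu[OF c] using i j by (simp add: circ_def)
qed (auto simp: Fm_def Gm_def circ_def)


lemma char_poly_Dm: "char_poly (Dm c \<mu>) = (\<Prod>k<c. [:- \<mu> k, 1:])"
proof -
  have ut: "upper_triangular (Dm c \<mu>)" unfolding upper_triangular_def Dm_def by auto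
  have "char_poly (Dm c \<mu>) = (\<Prod>a\<leftarrow>diag_mat (Dm c \<mu>). [:- a, 1:])"
    by (rule char_poly_upper_triangular[OF Dm_carrier ut])
  also have "diag_mat (Dm c \<mu>) = map \<mu> [0..<c]" unfolding diag_mat_def Dm_def
    by (rule nth_equalityI) auto
  also have "(\<Prod>a\<leftarrow>map \<mu> [0..<c]. [:- a, 1:]) = (\<Prod>k<c. [:- \<mu> k, 1:])"
    unfolding map_map o_def by (rule prod_list_upt_conv)
  finally show ?thesis .
qed

lemma circ_char_poly: assumes c: "c = 2 * s + 1"
  shows "char_poly (map_mat complex_of_real (circ c \<beta> s z)) =
    [:- complex_of_real \<beta>, 1:] * (\<Prod>k\<in>{1..s}. [:- z k, 1:] * [:- cnj (z k), 1:])"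
proof -
  have cp: "c > 0" using c by simp
  have sim: "similar_mat (map_mat complex_of_real (circ c \<beta> s z)) (Dm c (mu c \<beta> s z))"
    by (rule similar_matI[of _ _ "Fm c" "Gm c" c], insert FG[OF cp] GF[OF cp], auto simp: circ_DFT[OF c] intro!: mult_carrier_mat[of _ c c])
  have "char_poly (map_mat complex_of_real (circ c \<beta> s z)) = (\<Prod>k<c. [:- mu c \<beta> s z k, 1:])"
    unfolding char_poly_similar[OF sim] char_poly_Dm ..
  also have "\<dots> = [:- mu c \<beta> s z 0, 1:] * ((\<Prod>k\<in>{1..s}. [:- mu c \<beta> s z k, 1:]) * (\<Prod>k\<in>{s+1..2*s}. [:- mu c \<beta> s z k, 1:]))"
    unfolding c split_range by (subst prod.insert, auto simp: prod.union_disjoint)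
  also have "(\<Prod>k\<in>{s+1..2*s}. [:- mu c \<beta> s z k, 1:]) = (\<Prod>k\<in>{1..s}. [:- mu c \<beta> s z (c - k), 1:])"
    by (rule prod.reindex_bij_witness[of _ "\<lambda>k. c - k" "\<lambda>k. c - k"], auto simp: c)
  also have "\<dots> = (\<Prod>k\<in>{1..s}. [:- cnj (z k), 1:])"
    by (rule prod.cong, auto simp: mu_def c)
  also have "(\<Prod>k\<in>{1..s}. [:- mu c \<beta> s z k, 1:]) = (\<Prod>k\<in>{1..s}. [:- z k, 1:])"
    by (rule prod.cong, auto simp: mu_def)
  also have "mu c \<beta> s z 0 = complex_of_real \<beta>" by (simp add: mu_def)
  finally show ?thesis unfolding prod.distrib .
qed

lemma circ_transpose: "transpose_mat (circ c \<beta> s z) = circ c \<beta> s (\<lambda>k. cnj (z k))"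
proof (rule eq_matI)
  fix i j assume "i < dim_row (circ c \<beta> s (\<lambda>k. cnj (z k)))" "j < dim_col (circ c \<beta> s (\<lambda>k. cnj (z k)))"
  hence i: "i < c" and j: "j < c" by (auto simp: circ_def)
  have "Re (z k * E c (int k * (int j - int i))) = Re (cnj (z k) * E c (int k * (int i - int j)))" for k
  proof -
    have "Re (z k * E c (int k * (int j - int i))) = Re (cnj (z k * E c (int k * (int j - int i))))" by simp
    also have "cnj (z k * E c (int k * (int j - int i))) = cnj (z k) * E c (int k * (int i - int j))"
      by (simp add: E_cnj algebra_simps)
    finally show ?thesis .
  qed
  thus "transpose_mat (circ c \<beta> s z) $$ (i,j) = circ c \<beta> s (\<lambda>k. cnj (z k)) $$ (i,j)"
    using i j by (simp add: circ_def)
qed (auto simp: circ_def)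

lemma conj_mult:
  fixes A B P Q :: "'a::comm_ring_1 mat"
  assumes A: "A \<in> carrier_mat n n" and B: "B \<in> carrier_mat n n" and P: "P \<in> carrier_mat n n"
    and Q: "Q \<in> carrier_mat n n" and QP: "Q * P = 1\<^sub>m n"
  shows "P * A * Q * (P * B * Q) = P * (A * B) * Q"
proof -
  have "Q * (P * B * Q) = (Q * P) * B * Q"
    using A B P Q by (simp add: assoc_mult_mat[of _ n n _ n _ n])
  also have "\<dots> = B * Q" using QP B Q by simp
  finally have e: "Q * (P * B * Q) = B * Q" .
  have "P * A * Q * (P * B * Q) = P * A * (Q * (P * B * Q))"
    using A B P Q by (simp add: assoc_mult_mat[of _ n n _ n _ n])
  also have "\<dots> = P * A * (B * Q)" unfolding e ..
  also have "\<dots> = P * (A * B) * Q"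
    using A B P Q by (simp add: assoc_mult_mat[of _ n n _ n _ n])
  finally show ?thesis .
qed

lemma circ_comm: assumes c: "c = 2 * s + 1"
  shows "circ c \<beta> s z * circ c \<beta>' s z' = circ c \<beta>' s z' * circ c \<beta> s z"
proof -
  have cp: "c > 0" using c by simp
  let ?F = "Fm c" and ?G = "Gm c" and ?D1 = "Dm c (mu c \<beta> s z)" and ?D2 = "Dm c (mu c \<beta>' s z')"
  have "map_mat complex_of_real (circ c \<beta> s z * circ c \<beta>' s z') = ?F * ?D1 * ?G * (?F * ?D2 * ?G)"
    by (subst of_real_hom.mat_hom_mult[of _ c c _ c], auto simp: circ_DFT[OF c])
  also have "\<dots> = ?F * (?D1 * ?D2) * ?G" by (rule conj_mult[OF _ _ _ _ GF[OF cp]], auto)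
  also have "?D1 * ?D2 = ?D2 * ?D1" by (rule Dm_comm)
  also have "?F * (?D2 * ?D1) * ?G = ?F * ?D2 * ?G * (?F * ?D1 * ?G)"
    by (rule conj_mult[OF _ _ _ _ GF[OF cp], symmetric], auto)
  also have "\<dots> = map_mat complex_of_real (circ c \<beta>' s z' * circ c \<beta> s z)"
    by (subst of_real_hom.mat_hom_mult[of _ c c _ c], auto simp: circ_DFT[OF c])
  finally show ?thesis by (rule of_real_hom.mat_hom_inj)
qed

lemma circ_normal: assumes c: "c = 2 * s + 1"
  shows "circ c \<beta> s z * transpose_mat (circ c \<beta> s z) = transpose_mat (circ c \<beta> s z) * circ c \<beta> s z"
  unfolding circ_transpose by (rule circ_comm[OF c])


lemma norm_E[simp]: "cmod (E c t) = 1" unfolding E_def by simp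

lemma circ_entry: "i < c \<Longrightarrow> j < c \<Longrightarrow>
  circ c \<beta> s z $$ (i,j) = (\<beta> + 2 * (\<Sum>k\<in>{1..s}. Re (z k * E c (int k * (int i - int j))))) / real c"
  unfolding circ_def by simp

lemma circ_lower: assumes i: "i < c" and j: "j < c"
  shows "circ c \<beta> s z $$ (i,j) \<ge> (\<beta> - 2 * (\<Sum>k\<in>{1..s}. cmod (z k))) / real c"
proof -
  have "(\<Sum>k\<in>{1..s}. - cmod (z k)) \<le> (\<Sum>k\<in>{1..s}. Re (z k * E c (int k * (int i - int j))))"
  proof (rule sum_mono)
    fix k
    have "- cmod (z k * E c (int k * (int i - int j))) \<le> Re (z k * E c (int k * (int i - int j)))"
      using abs_Re_le_cmod[of "z k * E c (int k * (int i - int j))"] by linarith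
    thus "- cmod (z k) \<le> Re (z k * E c (int k * (int i - int j)))" by (simp add: norm_mult)
  qed
  hence "\<beta> - 2 * (\<Sum>k\<in>{1..s}. cmod (z k)) \<le> \<beta> + 2 * (\<Sum>k\<in>{1..s}. Re (z k * E c (int k * (int i - int j))))"
    by (simp add: sum_negf)
  thus ?thesis unfolding circ_entry[OF i j] by (simp add: divide_right_mono)
qed

lemma circ_abs: assumes i: "i < c" and j: "j < c"
  shows "\<bar>circ c \<beta> s z $$ (i,j)\<bar> \<le> (\<bar>\<beta>\<bar> + 2 * (\<Sum>k\<in>{1..s}. cmod (z k))) / real c"
proof -
  have "\<bar>\<Sum>k\<in>{1..s}. Re (z k * E c (int k * (int i - int j)))\<bar> \<le> (\<Sum>k\<in>{1..s}. \<bar>Re (z k * E c (int k * (int i - int j)))\<bar>)"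
    by (rule sum_abs)
  also have "\<dots> \<le> (\<Sum>k\<in>{1..s}. cmod (z k))"
  proof (rule sum_mono)
    fix k
    show "\<bar>Re (z k * E c (int k * (int i - int j)))\<bar> \<le> cmod (z k)"
      using abs_Re_le_cmod[of "z k * E c (int k * (int i - int j))"] by (simp add: norm_mult)
  qed
  finally have "\<bar>\<beta> + 2 * (\<Sum>k\<in>{1..s}. Re (z k * E c (int k * (int i - int j))))\<bar> \<le> \<bar>\<beta>\<bar> + 2 * (\<Sum>k\<in>{1..s}. cmod (z k))"
    by linarith
  thus ?thesis unfolding circ_entry[OF i j] by (simp add: divide_right_mono)
qed

lemma circ_ones: assumes c: "c = 2 * s + 1"
  shows "circ c \<beta> s z *\<^sub>v vec c (\<lambda>_. 1) = \<beta> \<cdot>\<^sub>v vec c (\<lambda>_. 1)"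
proof (rule eq_vecI)
  fix i assume "i < dim_vec (\<beta> \<cdot>\<^sub>v vec c (\<lambda>_. 1))"
  hence i: "i < c" by simp
  have cp: "c > 0" using c by simp
  have inner: "(\<Sum>j<c. z k * E c (int k * (int i - int j))) = 0" if k: "k \<in> {1..s}" for k
  proof -
    have "(\<Sum>j<c. z k * E c (int k * (int i - int j))) = z k * E c (int k * int i) * (\<Sum>j<c. E c (int j * (- int k)))"
      by (simp add: sum_distrib_left E_add[symmetric] algebra_simps)
    also have "(\<Sum>j<c. E c (int j * (- int k))) = 0"
    proof -
      have "\<not> int c dvd (- int k)" using k c
        by (auto dest!: zdvd_imp_le simp: dvd_minus_iff)
      thus ?thesis unfolding E_sum[OF cp] by simp
    qed
    finally show ?thesis by simp
  qed
  have "(circ c \<beta> s z *\<^sub>v vec c (\<lambda>_. 1)) $ i = (\<Sum>j<c. circ c \<beta> s z $$ (i,j))"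
    using i by (simp add: mult_mat_vec_def scalar_prod_def lessThan_atLeast0 circ_def)
  also have "\<dots> = (\<Sum>j<c. (\<beta> + 2 * (\<Sum>k\<in>{1..s}. Re (z k * E c (int k * (int i - int j))))) / real c)"
    by (rule sum.cong, auto simp: circ_entry i)
  also have "\<dots> = (real c * \<beta> + 2 * (\<Sum>k\<in>{1..s}. Re (\<Sum>j<c. z k * E c (int k * (int i - int j))))) / real c"
  proof -
    define f where "f = (\<lambda>k j. z k * E c (int k * (int i - int j)))"
    have sw: "(\<Sum>j<c. \<Sum>k\<in>{1..s}. Re (f k j)) = (\<Sum>k\<in>{1..s}. Re (\<Sum>j<c. f k j))"
      by (subst sum.swap) (simp only: Re_sum)
    have "(\<Sum>j<c. (\<beta> + 2 * (\<Sum>k\<in>{1..s}. Re (f k j))) / real c) = (real c * \<beta> + 2 * (\<Sum>k\<in>{1..s}. Re (\<Sum>j<c. f k j))) / real c"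
      unfolding sum_divide_distrib[symmetric] sum.distrib sum_distrib_left[symmetric] sw by simp
    thus ?thesis unfolding f_def .
  qed
  also have "\<dots> = \<beta>" using inner cp by simp
  finally show "(circ c \<beta> s z *\<^sub>v vec c (\<lambda>_. 1)) $ i = (\<beta> \<cdot>\<^sub>v vec c (\<lambda>_. 1)) $ i" using i by simp
qed (simp add: circ_def)



lemma mult_entry_Suc:
  assumes M: "M \<in> carrier_mat (Suc m) (Suc m)" and N: "N \<in> carrier_mat (Suc m) (Suc m)"
    and i: "i < Suc m" and j: "j < Suc m"
  shows "(M * N) $$ (i,j) = (\<Sum>k<m. M $$ (i,k) * N $$ (k,j)) + M $$ (i,m) * N $$ (m,j)"
  using M N i j by (simp add: scalar_prod_def lessThan_atLeast0[symmetric] lessThan_Suc add.commute)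

lemma mult_entry:
  assumes M: "M \<in> carrier_mat n m" and N: "N \<in> carrier_mat m p"
    and i: "i < n" and j: "j < p"
  shows "(M * N) $$ (i,j) = (\<Sum>k<m. M $$ (i,k) * N $$ (k,j))"
  using M N i j by (simp add: scalar_prod_def lessThan_atLeast0[symmetric])

lemma mult_vec_Suc:
  assumes M: "M \<in> carrier_mat (Suc m) (Suc m)" and w: "w \<in> carrier_vec (Suc m)" and i: "i < Suc m"
  shows "(M *\<^sub>v w) $ i = (\<Sum>k<m. M $$ (i,k) * w $ k) + M $$ (i,m) * w $ m"
  using M w i by (simp add: mult_mat_vec_def scalar_prod_def lessThan_atLeast0[symmetric] lessThan_Suc add.commute)

lemma glue_index:
  assumes A: "A \<in> carrier_mat m m" and i: "i < Suc m" and j: "j < Suc m"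
  shows "glue A u r d $$ (i,j) = (if i < m \<and> j < m then A $$ (i,j)
     else if i < m then r * u $ i else if j < m then r * u $ j else d)"
  using A i j unfolding glue_def by simp

lemma glue_transpose:
  assumes A: "A \<in> carrier_mat m m"
  shows "transpose_mat (glue A u r d) = glue (transpose_mat A) u r d"
  by (rule eq_matI, insert A, auto simp: glue_def)

lemma ev_entry:
  assumes A: "A \<in> carrier_mat m m" and u: "u \<in> carrier_vec m" and ev: "A *\<^sub>v u = \<alpha> \<cdot>\<^sub>v u" and i: "i < m"
  shows "(\<Sum>k<m. A $$ (i,k) * u $ k) = \<alpha> * u $ i"
  using mult_vec_entry[OF A u i] ev i u by simp

lemma glue_normal:
  fixes A :: "real mat"
  assumes A: "A \<in> carrier_mat m m" and u: "u \<in> carrier_vec m"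
    and N: "A * transpose_mat A = transpose_mat A * A"
    and ev: "A *\<^sub>v u = \<alpha> \<cdot>\<^sub>v u" and evt: "transpose_mat A *\<^sub>v u = \<alpha> \<cdot>\<^sub>v u"
  shows "glue A u r d * transpose_mat (glue A u r d) = transpose_mat (glue A u r d) * glue A u r d"
proof (rule eq_matI)
  let ?G = "glue A u r d"
  have G: "?G \<in> carrier_mat (Suc m) (Suc m)" using A by simp
  have Gt: "transpose_mat ?G \<in> carrier_mat (Suc m) (Suc m)" using A by simp
  have At: "transpose_mat A \<in> carrier_mat m m" using A by simp
  fix i j assume "i < dim_row (transpose_mat ?G * ?G)" "j < dim_col (transpose_mat ?G * ?G)"
  hence i: "i < Suc m" and j: "j < Suc m" using A by (auto simp: glue_def)
  have e1: "(\<Sum>k<m. A $$ (i,k) * u $ k) = \<alpha> * u $ i" if "i < m" for i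
    by (rule ev_entry[OF A u ev that])
  have e2: "(\<Sum>k<m. A $$ (k,i) * u $ k) = \<alpha> * u $ i" if "i < m" for i
    using ev_entry[OF At u evt that] that A by simp
  have n: "(\<Sum>k<m. A $$ (i,k) * A $$ (j,k)) = (\<Sum>k<m. A $$ (k,i) * A $$ (k,j))" if "i < m" "j < m" for i j
  proof -
    have "(A * transpose_mat A) $$ (i,j) = (transpose_mat A * A) $$ (i,j)" using N by simp
    hence "(\<Sum>k<m. A $$ (i,k) * transpose_mat A $$ (k,j)) = (\<Sum>k<m. transpose_mat A $$ (i,k) * A $$ (k,j))"
      by (simp only: mult_entry[OF A At that] mult_entry[OF At A that])
    moreover have "(\<Sum>k<m. A $$ (i,k) * transpose_mat A $$ (k,j)) = (\<Sum>k<m. A $$ (i,k) * A $$ (j,k))"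
      by (rule sum.cong) (use that A in auto)
    moreover have "(\<Sum>k<m. transpose_mat A $$ (i,k) * A $$ (k,j)) = (\<Sum>k<m. A $$ (k,i) * A $$ (k,j))"
      by (rule sum.cong) (use that A in auto)
    ultimately show ?thesis by simp
  qed
  have L: "(?G * transpose_mat ?G) $$ (i,j) = (\<Sum>k<m. ?G $$ (i,k) * ?G $$ (j,k)) + ?G $$ (i,m) * ?G $$ (j,m)"
    using mult_entry_Suc[OF G Gt i j] i j G by simp
  have R: "(transpose_mat ?G * ?G) $$ (i,j) = (\<Sum>k<m. ?G $$ (k,i) * ?G $$ (k,j)) + ?G $$ (m,i) * ?G $$ (m,j)"
    using mult_entry_Suc[OF Gt G i j] i j G by simp
  show "(?G * transpose_mat ?G) $$ (i,j) = (transpose_mat ?G * ?G) $$ (i,j)"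
  proof -
    consider "i < m" "j < m" | "i < m" "j = m" | "i = m" "j < m" | "i = m" "j = m" using i j by linarith
    thus ?thesis
    proof cases
      case 1
      have "(\<Sum>k<m. ?G $$ (i,k) * ?G $$ (j,k)) = (\<Sum>k<m. A $$ (i,k) * A $$ (j,k))"
        by (rule sum.cong, insert 1, auto simp: glue_index[OF A])
      moreover have "(\<Sum>k<m. ?G $$ (k,i) * ?G $$ (k,j)) = (\<Sum>k<m. A $$ (k,i) * A $$ (k,j))"
        by (rule sum.cong, insert 1, auto simp: glue_index[OF A])
      ultimately show ?thesis unfolding L R using 1 n[OF 1] by (simp add: glue_index[OF A])
    next
      case 2
      have "(\<Sum>k<m. ?G $$ (i,k) * ?G $$ (j,k)) = r * (\<Sum>k<m. A $$ (i,k) * u $ k)"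
        by (simp add: sum_distrib_left, rule sum.cong, insert 2, auto simp: glue_index[OF A])
      moreover have "(\<Sum>k<m. ?G $$ (k,i) * ?G $$ (k,j)) = r * (\<Sum>k<m. A $$ (k,i) * u $ k)"
        by (simp add: sum_distrib_left, rule sum.cong, insert 2, auto simp: glue_index[OF A])
      ultimately show ?thesis unfolding L R using 2 e1 e2 by (simp add: glue_index[OF A])
    next
      case 3
      have "(\<Sum>k<m. ?G $$ (i,k) * ?G $$ (j,k)) = r * (\<Sum>k<m. A $$ (j,k) * u $ k)"
        by (simp add: sum_distrib_left, rule sum.cong, insert 3, auto simp: glue_index[OF A])
      moreover have "(\<Sum>k<m. ?G $$ (k,i) * ?G $$ (k,j)) = r * (\<Sum>k<m. A $$ (k,j) * u $ k)"
        by (simp add: sum_distrib_left, rule sum.cong, insert 3, auto simp: glue_index[OF A])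
      ultimately show ?thesis unfolding L R using 3 e1 e2 by (simp add: glue_index[OF A])
    next
      case 4
      have "(\<Sum>k<m. ?G $$ (i,k) * ?G $$ (j,k)) = (\<Sum>k<m. ?G $$ (k,i) * ?G $$ (k,j))"
        by (rule sum.cong, insert 4, auto simp: glue_index[OF A])
      thus ?thesis unfolding L R using 4 by simp
    qed
  qed
qed (insert A, auto simp: glue_def)


lemma quad_id: fixes a d g :: "'a::comm_ring_1"
  shows "[:-a, 1:] * [:-d, 1:] - [:(d + g) * (a + g):] = [:-(a + d + g), 1:] * [:g, 1:]"
  by (simp add: algebra_simps)

definition gvec :: "real vec \<Rightarrow> real \<Rightarrow> real vec" where
  "gvec u t = vec (Suc (dim_vec u)) (\<lambda>i. if i < dim_vec u then t * u $ i else 1)"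

lemma gvec_carrier[simp]: "u \<in> carrier_vec m \<Longrightarrow> gvec u t \<in> carrier_vec (Suc m)"
  unfolding gvec_def by auto

lemma glue_eigen:
  fixes A :: "real mat"
  assumes A: "A \<in> carrier_mat m m" and u: "u \<in> carrier_vec m" and ev: "A *\<^sub>v u = \<alpha> \<cdot>\<^sub>v u"
    and dg: "d + g \<noteq> 0" and rr: "r * r * (u \<bullet> u) = (d + g) * (\<alpha> + g)"
  shows "glue A u r d *\<^sub>v gvec u (r / (d + g)) = (\<alpha> + d + g) \<cdot>\<^sub>v gvec u (r / (d + g))"
proof (rule eq_vecI)
  let ?t = "r / (d + g)"
  let ?w = "gvec u ?t"
  have G: "glue A u r d \<in> carrier_mat (Suc m) (Suc m)" using A by simp
  have w: "?w \<in> carrier_vec (Suc m)" using u by simp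
  fix i assume "i < dim_vec ((\<alpha> + d + g) \<cdot>\<^sub>v ?w)"
  hence i: "i < Suc m" using u by (simp add: gvec_def)
  have uu: "u \<bullet> u = (\<Sum>k<m. u $ k * u $ k)" using u by (simp add: scalar_prod_def lessThan_atLeast0)
  have "(glue A u r d *\<^sub>v ?w) $ i = (\<Sum>k<m. glue A u r d $$ (i,k) * ?w $ k) + glue A u r d $$ (i,m) * ?w $ m"
    by (rule mult_vec_Suc[OF G w i])
  also have "\<dots> = (\<alpha> + d + g) * ?w $ i"
  proof (cases "i < m")
    case True
    have "(\<Sum>k<m. glue A u r d $$ (i,k) * ?w $ k) = ?t * (\<Sum>k<m. A $$ (i,k) * u $ k)"
      by (simp add: sum_distrib_left, rule sum.cong, insert True u, auto simp: glue_index[OF A] gvec_def)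
    also have "\<dots> = ?t * (\<alpha> * u $ i)" using ev_entry[OF A u ev True] by simp
    finally show ?thesis using True u dg by (simp add: glue_index[OF A] gvec_def field_simps)
  next
    case False
    hence im: "i = m" using i by simp
    have "(\<Sum>k<m. glue A u r d $$ (i,k) * ?w $ k) = r * ?t * (\<Sum>k<m. u $ k * u $ k)"
      by (simp add: sum_distrib_left, rule sum.cong, insert im u, auto simp: glue_index[OF A] gvec_def)
    also have "\<dots> = (\<alpha> + g)" unfolding uu[symmetric] using rr dg by (simp add: field_simps)
    finally show ?thesis using im u by (simp add: glue_index[OF A] gvec_def)
  qed
  finally show "(glue A u r d *\<^sub>v ?w) $ i = ((\<alpha> + d + g) \<cdot>\<^sub>v ?w) $ i" using i u by (simp add: gvec_def)
qed (insert A u, auto simp: gvec_def glue_def)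


definition Inv :: "real mat \<Rightarrow> nat \<Rightarrow> real \<Rightarrow> real vec \<Rightarrow> complex poly \<Rightarrow> bool" where
  "Inv X m \<alpha> u P \<longleftrightarrow> X \<in> carrier_mat m m \<and> u \<in> carrier_vec m \<and> (\<forall>i<m. \<forall>j<m. X $$ (i,j) \<ge> 0)
     \<and> (\<forall>i<m. u $ i \<ge> 0) \<and> u \<bullet> u > 0 \<and> \<alpha> \<ge> 0
     \<and> X * transpose_mat X = transpose_mat X * X \<and> X *\<^sub>v u = \<alpha> \<cdot>\<^sub>v u \<and> transpose_mat X *\<^sub>v u = \<alpha> \<cdot>\<^sub>v u
     \<and> char_poly (map_mat complex_of_real X) = [:- complex_of_real \<alpha>, 1:] * P"

lemma map_glue: assumes "A \<in> carrier_mat m m" "u \<in> carrier_vec m"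
  shows "map_mat (complex_of_real) (glue A u r d) =
   glue (map_mat complex_of_real A) (map_vec complex_of_real u) (complex_of_real r) (complex_of_real d)"
  by (rule eq_matI, insert assms, auto simp: glue_def)

lemma map_scalar_prod: "u \<in> carrier_vec m \<Longrightarrow>
  map_vec complex_of_real u \<bullet> map_vec complex_of_real u = complex_of_real (u \<bullet> u)"
  by (simp add: scalar_prod_def of_real_sum)

lemma Inv_step:
  assumes I: "Inv X m \<alpha> u P" and d: "d \<ge> 0" and g: "g > 0"
    and r: "r = sqrt ((d + g) * (\<alpha> + g) / (u \<bullet> u))"
  shows "Inv (glue X u r d) (Suc m) (\<alpha> + d + g) (gvec u (r / (d + g))) (P * [:complex_of_real g, 1:])"
proof -
  from I have X: "X \<in> carrier_mat m m" and u: "u \<in> carrier_vec m" and Xnn: "\<forall>i<m. \<forall>j<m. X $$ (i,j) \<ge> 0"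
    and unn: "\<forall>i<m. u $ i \<ge> 0" and uu: "u \<bullet> u > 0" and a: "\<alpha> \<ge> 0"
    and N: "X * transpose_mat X = transpose_mat X * X" and ev: "X *\<^sub>v u = \<alpha> \<cdot>\<^sub>v u"
    and evt: "transpose_mat X *\<^sub>v u = \<alpha> \<cdot>\<^sub>v u"
    and cp: "char_poly (map_mat complex_of_real X) = [:- complex_of_real \<alpha>, 1:] * P"
    unfolding Inv_def by auto
  have Xt: "transpose_mat X \<in> carrier_mat m m" using X by simp
  have dg: "d + g > 0" using d g by simp
  have r0: "r \<ge> 0" unfolding r using d g a uu by simp
  have rr: "r * r * (u \<bullet> u) = (d + g) * (\<alpha> + g)"
  proof -
    have "r * r = (d + g) * (\<alpha> + g) / (u \<bullet> u)" unfolding r using d g a uu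
      by (simp add: real_sqrt_mult_self)
    thus ?thesis using uu by simp
  qed
  let ?t = "r / (d + g)"
  let ?G = "glue X u r d"
  let ?w = "gvec u ?t"
  have G: "?G \<in> carrier_mat (Suc m) (Suc m)" using X by simp
  have w: "?w \<in> carrier_vec (Suc m)" using u by simp
  have t0: "?t \<ge> 0" using r0 dg by simp
  have nn: "\<forall>i<Suc m. \<forall>j<Suc m. ?G $$ (i,j) \<ge> 0"
    using Xnn unn r0 d by (auto simp: glue_index[OF X])
  have wnn: "\<forall>i<Suc m. ?w $ i \<ge> 0" using unn r0 dg u by (auto simp: gvec_def)
  have ww: "?w \<bullet> ?w = ?t * ?t * (u \<bullet> u) + 1"
  proof -
    have "?w \<bullet> ?w = (\<Sum>k<Suc m. ?w $ k * ?w $ k)" using w by (simp add: scalar_prod_def lessThan_atLeast0)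
    also have "\<dots> = (\<Sum>k<m. ?w $ k * ?w $ k) + ?w $ m * ?w $ m" by simp
    also have "(\<Sum>k<m. ?w $ k * ?w $ k) = (\<Sum>k<m. ?t * ?t * (u $ k * u $ k))"
      by (rule sum.cong, insert u, auto simp: gvec_def)
    also have "?w $ m * ?w $ m = 1" using u by (simp add: gvec_def)
    also have "(\<Sum>k<m. ?t * ?t * (u $ k * u $ k)) + 1 = ?t * ?t * (u \<bullet> u) + 1"
      using u by (simp add: scalar_prod_def lessThan_atLeast0 sum_distrib_left)
    finally show ?thesis .
  qed
  have wpos: "?w \<bullet> ?w > 0" unfolding ww using uu by (simp add: add_nonneg_pos)
  have Gn: "?G * transpose_mat ?G = transpose_mat ?G * ?G" by (rule glue_normal[OF X u N ev evt])
  have Gev: "?G *\<^sub>v ?w = (\<alpha> + d + g) \<cdot>\<^sub>v ?w" by (rule glue_eigen[OF X u ev _ rr], insert dg, simp)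
  have Gevt: "transpose_mat ?G *\<^sub>v ?w = (\<alpha> + d + g) \<cdot>\<^sub>v ?w"
    unfolding glue_transpose[OF X] by (rule glue_eigen[OF Xt u evt _ rr], insert dg, simp)
  let ?Xc = "map_mat complex_of_real X"
  let ?uc = "map_vec complex_of_real u"
  have Xc: "?Xc \<in> carrier_mat m m" using X by simp
  have uc: "?uc \<in> carrier_vec m" using u by simp
  have evc: "?Xc *\<^sub>v ?uc = complex_of_real \<alpha> \<cdot>\<^sub>v ?uc"
    using of_real_hom.mult_mat_vec_hom[OF X u] ev of_real_hom.vec_hom_smult[of \<alpha> u] by metis
  have "char_poly (map_mat complex_of_real ?G) * [:- complex_of_real \<alpha>, 1:] =
     char_poly ?Xc * ([:- complex_of_real \<alpha>, 1:] * [:- complex_of_real d, 1:] - [: complex_of_real r * complex_of_real r * (?uc \<bullet> ?uc) :])"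
    unfolding map_glue[OF X u] by (rule glue_char_poly[OF Xc uc evc])
  also have "complex_of_real r * complex_of_real r * (?uc \<bullet> ?uc) = (complex_of_real d + complex_of_real g) * (complex_of_real \<alpha> + complex_of_real g)"
    unfolding map_scalar_prod[OF u] using rr by (metis of_real_add of_real_mult)
  also have "[:- complex_of_real \<alpha>, 1:] * [:- complex_of_real d, 1:] - [:(complex_of_real d + complex_of_real g) * (complex_of_real \<alpha> + complex_of_real g):]
     = [:- (complex_of_real \<alpha> + complex_of_real d + complex_of_real g), 1:] * [:complex_of_real g, 1:]"
    by (rule quad_id)
  finally have "char_poly (map_mat complex_of_real ?G) * [:- complex_of_real \<alpha>, 1:] =
      ([:- complex_of_real (\<alpha> + d + g), 1:] * (P * [:complex_of_real g, 1:])) * [:- complex_of_real \<alpha>, 1:]"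
    unfolding cp by (simp only: of_real_add mult.assoc mult.commute mult.left_commute)
  hence cpG: "char_poly (map_mat complex_of_real ?G) = [:- complex_of_real (\<alpha> + d + g), 1:] * (P * [:complex_of_real g, 1:])"
    by (rule mult_right_cancel[THEN iffD1, rotated]) simp
  show ?thesis unfolding Inv_def
    using G w nn wnn wpos a d g Gn Gev Gevt cpG by auto
qed



definition ff :: "nat \<Rightarrow> nat \<Rightarrow> nat" where "ff N i = min i (N - 1 - i)"
definition ww :: "nat \<Rightarrow> nat \<Rightarrow> real" where "ww N i = (if i = N - 1 - i then 1 else 1 / sqrt 2)"
definition sg :: "nat \<Rightarrow> nat \<Rightarrow> real" where
  "sg N i = (if i = N - 1 - i then 0 else if i < N - 1 - i then 1 / sqrt 2 else - 1 / sqrt 2)"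

definition Km :: "nat \<Rightarrow> real mat" where
  "Km N = mat N N (\<lambda>(i,a). (if a = ff N i then ww N i else 0) + (if a = (N - N div 2) + ff N i then sg N i else 0))"

lemma ff_lt: "i < N \<Longrightarrow> ff N i < N - N div 2"
  unfolding ff_def by linarith

lemma ff_lt2: "i < N \<Longrightarrow> sg N i \<noteq> 0 \<Longrightarrow> ff N i < N div 2"
  unfolding ff_def sg_def by (auto split: if_splits)

lemma Km_carrier[simp]: "Km N \<in> carrier_mat N N" unfolding Km_def by simp
lemma dim_Km[simp]: "dim_row (Km N) = N" "dim_col (Km N) = N" unfolding Km_def by simp_all

lemma Km_row:
  assumes M: "M \<in> carrier_mat N p" and i: "i < N" and b: "b < p"
  shows "(Km N * M) $$ (i,b) = ww N i * M $$ (ff N i, b) + sg N i * M $$ ((N - N div 2) + ff N i, b)"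
proof -
  let ?mX = "N - N div 2"
  have "(Km N * M) $$ (i,b) = (\<Sum>a<N. Km N $$ (i,a) * M $$ (a,b))"
    by (rule mult_entry[OF Km_carrier M i b])
  also have "\<dots> = (\<Sum>a<N. ((if a = ff N i then ww N i else 0) + (if a = ?mX + ff N i then sg N i else 0)) * M $$ (a,b))"
    by (rule sum.cong) (use i in \<open>auto simp: Km_def\<close>)
  also have "\<dots> = (\<Sum>a<N. (if a = ff N i then ww N i * M $$ (a,b) else 0) + (if a = ?mX + ff N i then sg N i * M $$ (a,b) else 0))"
    by (rule sum.cong) auto
  also have "\<dots> = (\<Sum>a<N. if a = ff N i then ww N i * M $$ (a,b) else 0) + (\<Sum>a<N. if a = ?mX + ff N i then sg N i * M $$ (a,b) else 0)"
    by (rule sum.distrib)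
  also have "(\<Sum>a<N. if a = ff N i then ww N i * M $$ (a,b) else 0) = ww N i * M $$ (ff N i, b)"
    using ff_lt[OF i] by simp
  also have "(\<Sum>a<N. if a = ?mX + ff N i then sg N i * M $$ (a,b) else 0) = sg N i * M $$ (?mX + ff N i, b)"
  proof (cases "sg N i = 0")
    case True thus ?thesis by simp
  next
    case False
    hence "?mX + ff N i < N" using ff_lt2[OF i False] by linarith
    thus ?thesis by simp
  qed
  finally show ?thesis .
qed

lemma Km_col:
  assumes M: "M \<in> carrier_mat p N" and j: "j < N" and a: "a < p"
  shows "(M * transpose_mat (Km N)) $$ (a,j) = M $$ (a, ff N j) * ww N j + M $$ (a, (N - N div 2) + ff N j) * sg N j"
proof -
  have "(M * transpose_mat (Km N)) = transpose_mat (Km N * transpose_mat M)"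
    using M by (simp add: transpose_mult[of _ N N])
  hence "(M * transpose_mat (Km N)) $$ (a,j) = (Km N * transpose_mat M) $$ (j,a)"
    using M j a by simp
  also have "\<dots> = ww N j * transpose_mat M $$ (ff N j, a) + sg N j * transpose_mat M $$ ((N - N div 2) + ff N j, a)"
    by (rule Km_row, insert M j a, auto)
  also have "\<dots> = M $$ (a, ff N j) * ww N j + M $$ (a, (N - N div 2) + ff N j) * sg N j"
  proof (cases "sg N j = 0")
    case True thus ?thesis using M a ff_lt[OF j] by simp
  next
    case False
    hence "(N - N div 2) + ff N j < N" using ff_lt2[OF j False] by linarith
    thus ?thesis using M a ff_lt[OF j] by simp
  qed
  finally show ?thesis .
qed


lemma ff_eq: assumes "i < N" "j < N" "ff N i = ff N j" shows "j = i \<or> j = N - 1 - i"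
  using assms unfolding ff_def by linarith

lemma sq2: "(1 / sqrt 2) * (1 / sqrt 2) = (1/2 :: real)"
proof -
  have "sqrt 2 * sqrt 2 = (2::real)" by simp
  thus ?thesis by (metis times_divide_times_eq mult_1)
qed

lemma ww_sym: "i < N \<Longrightarrow> ww N (N - 1 - i) = ww N i" unfolding ww_def by auto
lemma sg_sym: "i < N \<Longrightarrow> sg N (N - 1 - i) = - sg N i" unfolding sg_def by auto
lemma ff_sym: "i < N \<Longrightarrow> ff N (N - 1 - i) = ff N i" unfolding ff_def by auto

lemma ww_sg_sq: "ww N i * ww N i + sg N i * sg N i = 1"
  unfolding ww_def sg_def using sq2 by auto

lemma KKt: "Km N * transpose_mat (Km N) = 1\<^sub>m N"
proof (rule eq_matI)
  let ?mX = "N - N div 2"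
  fix i j assume "i < dim_row (1\<^sub>m N)" "j < dim_col (1\<^sub>m N)"
  hence i: "i < N" and j: "j < N" by auto
  have fi: "ff N i < ?mX" "ff N j < ?mX" using ff_lt i j by auto
  have e1: "transpose_mat (Km N) $$ (ff N i, j) = (if ff N i = ff N j then ww N j else 0)"
    using fi i j by (auto simp: Km_def)
  have e2: "sg N i * transpose_mat (Km N) $$ (?mX + ff N i, j) = sg N i * (if ff N i = ff N j then sg N j else 0)"
  proof (cases "sg N i = 0")
    case False
    hence "?mX + ff N i < N" using ff_lt2[OF i False] by linarith
    moreover have "N + ff N i - N div 2 = N + ff N j - N div 2 \<longleftrightarrow> ff N i = ff N j" by arith
    ultimately show ?thesis using fi i j by (auto simp: Km_def)
  qed simp
  have "(Km N * transpose_mat (Km N)) $$ (i,j) = ww N i * transpose_mat (Km N) $$ (ff N i, j) + sg N i * transpose_mat (Km N) $$ (?mX + ff N i, j)"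
    by (rule Km_row, insert i j, auto)
  also have "\<dots> = (if ff N i = ff N j then ww N i * ww N j + sg N i * sg N j else 0)"
    unfolding e1 e2 by simp
  also have "\<dots> = (if i = j then 1 else 0)"
  proof (cases "ff N i = ff N j")
    case True
    from ff_eq[OF i j True] show ?thesis
    proof
      assume "j = i" thus ?thesis using ww_sg_sq by simp
    next
      assume ji: "j = N - 1 - i"
      show ?thesis
      proof (cases "i = j")
        case True thus ?thesis using ww_sg_sq by simp
      next
        case False
        hence "i \<noteq> N - 1 - i" using ji by simp
        thus ?thesis using ji True False sq2 i by (auto simp: ww_def sg_def)
      qed
    qed
  next
    case False thus ?thesis by auto
  qed
  finally show "(Km N * transpose_mat (Km N)) $$ (i,j) = 1\<^sub>m N $$ (i,j)" using i j by simp
qed auto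

lemma KtK: "transpose_mat (Km N) * Km N = 1\<^sub>m N"
  by (rule mat_mult_left_right_inverse[OF Km_carrier _ KKt], simp)


definition DD :: "'a::zero mat \<Rightarrow> 'a mat \<Rightarrow> 'a mat" where
  "DD X Y = four_block_mat X (0\<^sub>m (dim_row X) (dim_row Y)) (0\<^sub>m (dim_row Y) (dim_row X)) Y"

lemma DD_carrier[simp]: "X \<in> carrier_mat a a \<Longrightarrow> Y \<in> carrier_mat b b \<Longrightarrow> DD X Y \<in> carrier_mat (a + b) (a + b)"
  unfolding DD_def by auto

lemma char_poly_DD:
  fixes X Y :: "'a::idom mat"
  assumes X: "X \<in> carrier_mat a a" and Y: "Y \<in> carrier_mat b b"
  shows "char_poly (DD X Y) = char_poly X * char_poly Y"
proof -
  let ?cm = "\<lambda> A. [:0, 1:] \<cdot>\<^sub>m 1\<^sub>m (dim_row A) + map_mat (\<lambda>a. [:- a:]) A"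
  have "char_poly (DD X Y) = det (?cm (DD X Y))"
    unfolding char_poly_defs by simp
  also have "?cm (DD X Y) = four_block_mat (?cm X) (0\<^sub>m a b) (0\<^sub>m b a) (?cm Y)"
    by (rule eq_matI, insert X Y, auto simp: DD_def one_poly_def)
  also have "det \<dots> = det (?cm X) * det (?cm Y)"
    by (rule det_four_block_mat_lower_left_zero[OF _ _ refl], insert X Y, auto)
  also have "\<dots> = char_poly X * char_poly Y" unfolding char_poly_defs ..
  finally show ?thesis .
qed

lemma DD_normal:
  fixes X Y :: "real mat"
  assumes X: "X \<in> carrier_mat a a" and Y: "Y \<in> carrier_mat b b"
    and XN: "X * transpose_mat X = transpose_mat X * X" and YN: "Y * transpose_mat Y = transpose_mat Y * Y"
  shows "DD X Y * transpose_mat (DD X Y) = transpose_mat (DD X Y) * DD X Y"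
proof -
  have t: "transpose_mat (DD X Y) = four_block_mat (transpose_mat X) (0\<^sub>m a b) (0\<^sub>m b a) (transpose_mat Y)"
    unfolding DD_def using X Y by (subst transpose_four_block_mat, auto)
  have d: "DD X Y = four_block_mat X (0\<^sub>m a b) (0\<^sub>m b a) Y" unfolding DD_def using X Y by simp
  have Xt: "transpose_mat X \<in> carrier_mat a a" and Yt: "transpose_mat Y \<in> carrier_mat b b" using X Y by auto
  have 1: "four_block_mat X (0\<^sub>m a b) (0\<^sub>m b a) Y * four_block_mat (transpose_mat X) (0\<^sub>m a b) (0\<^sub>m b a) (transpose_mat Y)
    = four_block_mat (X * transpose_mat X + 0\<^sub>m a b * 0\<^sub>m b a) (X * 0\<^sub>m a b + 0\<^sub>m a b * transpose_mat Y)
       (0\<^sub>m b a * transpose_mat X + Y * 0\<^sub>m b a) (0\<^sub>m b a * 0\<^sub>m a b + Y * transpose_mat Y)"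
    by (rule mult_four_block_mat[OF X zero_carrier_mat zero_carrier_mat Y Xt zero_carrier_mat zero_carrier_mat Yt])
  have 2: "four_block_mat (transpose_mat X) (0\<^sub>m a b) (0\<^sub>m b a) (transpose_mat Y) * four_block_mat X (0\<^sub>m a b) (0\<^sub>m b a) Y
    = four_block_mat (transpose_mat X * X + 0\<^sub>m a b * 0\<^sub>m b a) (transpose_mat X * 0\<^sub>m a b + 0\<^sub>m a b * Y)
       (0\<^sub>m b a * X + transpose_mat Y * 0\<^sub>m b a) (0\<^sub>m b a * 0\<^sub>m a b + transpose_mat Y * Y)"
    by (rule mult_four_block_mat[OF Xt zero_carrier_mat zero_carrier_mat Yt X zero_carrier_mat zero_carrier_mat Y])
  show ?thesis unfolding t unfolding d 1 2 using X Y Xt Yt XN YN by simp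
qed

definition QQ :: "nat \<Rightarrow> real mat \<Rightarrow> real mat \<Rightarrow> real mat" where
  "QQ N X Y = mat N N (\<lambda>(i,j). ww N i * ww N j * X $$ (ff N i, ff N j) + sg N i * sg N j * Y $$ (ff N i, ff N j))"

lemma QQ_eq:
  assumes X: "X \<in> carrier_mat (N - N div 2) (N - N div 2)" and Y: "Y \<in> carrier_mat (N div 2) (N div 2)"
  shows "QQ N X Y = Km N * DD X Y * transpose_mat (Km N)"
proof (rule eq_matI)
  define mX where "mX = N - N div 2"
  let ?m = "N div 2"
  have NN: "mX + ?m = N" unfolding mX_def by simp
  have D: "DD X Y \<in> carrier_mat N N" using DD_carrier[OF X Y] NN unfolding mX_def by simp
  have KD: "Km N * DD X Y \<in> carrier_mat N N" using mult_carrier_mat[OF Km_carrier D] .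
  have Dent: "DD X Y $$ (p,q) = (if p < mX \<and> q < mX then X $$ (p,q) else if mX \<le> p \<and> mX \<le> q then Y $$ (p - mX, q - mX) else 0)"
    if "p < N" "q < N" for p q
    using that X Y by (auto simp: DD_def mX_def)
  fix i j assume "i < dim_row (Km N * DD X Y * transpose_mat (Km N))" "j < dim_col (Km N * DD X Y * transpose_mat (Km N))"
  hence i: "i < N" and j: "j < N" by auto
  have fi: "ff N i < mX" and fj: "ff N j < mX" using ff_lt i j unfolding mX_def by auto
  have fiN: "ff N i < N" and fjN: "ff N j < N" using fi fj NN by linarith+
  have row: "(Km N * DD X Y) $$ (i,b) = ww N i * DD X Y $$ (ff N i, b) + sg N i * DD X Y $$ (mX + ff N i, b)" if "b < N" for b
    using Km_row[OF D i that] unfolding mX_def .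
  have z1: "sg N i * DD X Y $$ (mX + ff N i, ff N j) = 0"
  proof (cases "sg N i = 0")
    case False
    hence a: "mX + ff N i < N" using ff_lt2[OF i False] NN by linarith
    show ?thesis using Dent[OF a fjN] fj by simp
  qed simp
  have "(Km N * DD X Y * transpose_mat (Km N)) $$ (i,j) =
      (Km N * DD X Y) $$ (i, ff N j) * ww N j + (Km N * DD X Y) $$ (i, mX + ff N j) * sg N j"
    using Km_col[OF KD j i] unfolding mX_def .
  also have "(Km N * DD X Y) $$ (i, ff N j) * ww N j = ww N i * ww N j * X $$ (ff N i, ff N j)"
    unfolding row[OF fjN] distrib_right z1 using Dent[OF fiN fjN] fi fj by simp
  also have "(Km N * DD X Y) $$ (i, mX + ff N j) * sg N j = sg N i * sg N j * Y $$ (ff N i, ff N j)"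
  proof (cases "sg N j = 0")
    case True thus ?thesis by simp
  next
    case False
    have b: "mX + ff N j < N" using ff_lt2[OF j False] NN by linarith
    have z2: "ww N i * DD X Y $$ (ff N i, mX + ff N j) = 0" using Dent[OF fiN b] fi by simp
    have z3: "sg N i * DD X Y $$ (mX + ff N i, mX + ff N j) = sg N i * Y $$ (ff N i, ff N j)"
    proof (cases "sg N i = 0")
      case False
      hence a: "mX + ff N i < N" using ff_lt2[OF i False] NN by linarith
      thus ?thesis using Dent[OF a b] by simp
    qed simp
    show ?thesis unfolding row[OF b] distrib_right z2 z3 by simp
  qed
  finally show "QQ N X Y $$ (i,j) = (Km N * DD X Y * transpose_mat (Km N)) $$ (i,j)"
    using i j by (simp add: QQ_def)
qed (auto simp: QQ_def)


lemma rev_id_carrier[simp]: "rev_id_mat N \<in> carrier_mat N N" unfolding rev_id_mat_def by simp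

lemma revJ_left:
  fixes M :: "'a::comm_ring_1 mat"
  assumes M: "M \<in> carrier_mat N N" and i: "i < N" and b: "b < N"
  shows "(rev_id_mat N * M) $$ (i,b) = M $$ (N - 1 - i, b)"
proof -
  have "(rev_id_mat N * M) $$ (i,b) = (\<Sum>k<N. rev_id_mat N $$ (i,k) * M $$ (k,b))"
    by (rule mult_entry[OF rev_id_carrier M i b])
  also have "\<dots> = (\<Sum>k<N. if k = N - 1 - i then M $$ (k,b) else 0)"
    by (rule sum.cong, insert i, auto simp: rev_id_mat_def)
  also have "\<dots> = M $$ (N - 1 - i, b)" using i by simp
  finally show ?thesis .
qed

lemma revJ_right:
  fixes M :: "'a::comm_ring_1 mat"
  assumes M: "M \<in> carrier_mat N N" and a: "a < N" and j: "j < N"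
  shows "(M * rev_id_mat N) $$ (a,j) = M $$ (a, N - 1 - j)"
proof -
  have "(M * rev_id_mat N) $$ (a,j) = (\<Sum>k<N. M $$ (a,k) * rev_id_mat N $$ (k,j))"
    by (rule mult_entry[OF M rev_id_carrier a j])
  also have "\<dots> = (\<Sum>k<N. if k = N - 1 - j then M $$ (a,k) else 0)"
    by (rule sum.cong, insert j, auto simp: rev_id_mat_def)
  also have "\<dots> = M $$ (a, N - 1 - j)" using j by simp
  finally show ?thesis .
qed

lemma map_DD: assumes "X \<in> carrier_mat a a" "Y \<in> carrier_mat b b"
  shows "map_mat complex_of_real (DD X Y) = DD (map_mat complex_of_real X) (map_mat complex_of_real Y)"
  by (rule eq_matI, insert assms, auto simp: DD_def)

lemma assemble:
  fixes X Y :: "real mat"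
  assumes X: "X \<in> carrier_mat (N - N div 2) (N - N div 2)" and Y: "Y \<in> carrier_mat (N div 2) (N div 2)"
    and XN: "X * transpose_mat X = transpose_mat X * X" and YN: "Y * transpose_mat Y = transpose_mat Y * Y"
    and Xnn: "\<forall>i < N - N div 2. \<forall>j < N - N div 2. X $$ (i,j) \<ge> 0"
    and dom: "\<forall>i < N div 2. \<forall>j < N div 2. \<bar>Y $$ (i,j)\<bar> \<le> X $$ (i,j)"
  shows "QQ N X Y \<in> carrier_mat N N \<and> normal_real_mat (QQ N X Y) \<and> centrosymmetric (QQ N X Y)
     \<and> nonneg_mat (QQ N X Y)
     \<and> char_poly (map_mat complex_of_real (QQ N X Y)) = char_poly (map_mat complex_of_real X) * char_poly (map_mat complex_of_real Y)"
proof -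
  let ?Q = "QQ N X Y" and ?K = "Km N" and ?D = "DD X Y"
  have NN: "(N - N div 2) + N div 2 = N" by simp
  have D: "?D \<in> carrier_mat N N" using DD_carrier[OF X Y] NN by simp
  have Dt: "transpose_mat ?D \<in> carrier_mat N N" using D by simp
  have Kt: "transpose_mat ?K \<in> carrier_mat N N" by simp
  have Q: "?Q \<in> carrier_mat N N" unfolding QQ_def by simp
  have Qe: "?Q = ?K * ?D * transpose_mat ?K" by (rule QQ_eq[OF X Y])
  have Qt: "transpose_mat ?Q = ?K * transpose_mat ?D * transpose_mat ?K"
    unfolding Qe using D
    by (simp add: transpose_mult[of _ N N _ N] assoc_mult_mat[of _ N N _ N _ N])
  have "?Q * transpose_mat ?Q = ?K * (?D * transpose_mat ?D) * transpose_mat ?K"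
    unfolding Qt by (subst Qe, rule conj_mult[OF D Dt Km_carrier Kt KtK])
  also have "?D * transpose_mat ?D = transpose_mat ?D * ?D" by (rule DD_normal[OF X Y XN YN])
  also have "?K * (transpose_mat ?D * ?D) * transpose_mat ?K = transpose_mat ?Q * ?Q"
    unfolding Qt by (subst Qe, rule conj_mult[OF Dt D Km_carrier Kt KtK, symmetric])
  finally have normal: "normal_real_mat ?Q" unfolding normal_real_mat_def using Q by auto
  have sim: "similar_mat ?Q ?D"
    by (rule similar_matI[OF _ KKt KtK Qe], insert D Q, auto)
  have "char_poly (map_mat complex_of_real ?Q) = map_poly complex_of_real (char_poly ?Q)"
    by (rule of_real_hom.char_poly_hom[OF Q])
  also have "char_poly ?Q = char_poly ?D" by (rule char_poly_similar[OF sim])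
  also have "map_poly complex_of_real (char_poly ?D) = char_poly (map_mat complex_of_real ?D)"
    by (rule of_real_hom.char_poly_hom[OF D, symmetric])
  also have "\<dots> = char_poly (map_mat complex_of_real X) * char_poly (map_mat complex_of_real Y)"
    unfolding map_DD[OF X Y] by (rule char_poly_DD, insert X Y, auto)
  finally have cp: "char_poly (map_mat complex_of_real ?Q) = char_poly (map_mat complex_of_real X) * char_poly (map_mat complex_of_real Y)" .
  have cs: "centrosymmetric ?Q" unfolding centrosymmetric_def
  proof
    show "square_mat ?Q" using Q by auto
    have dQ: "dim_row ?Q = N" using Q by simp
    show "rev_id_mat (dim_row ?Q) * ?Q * rev_id_mat (dim_row ?Q) = ?Q" unfolding dQ
    proof (rule eq_matI)
      fix i j assume "i < dim_row ?Q" "j < dim_col ?Q"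
      hence i: "i < N" and j: "j < N" using Q by auto
      have JQ: "rev_id_mat N * ?Q \<in> carrier_mat N N" using mult_carrier_mat[OF rev_id_carrier Q] .
      have "(rev_id_mat N * ?Q * rev_id_mat N) $$ (i,j) = (rev_id_mat N * ?Q) $$ (i, N - 1 - j)"
        by (rule revJ_right[OF JQ i j])
      also have "\<dots> = ?Q $$ (N - 1 - i, N - 1 - j)"
        by (rule revJ_left[OF Q i], insert j, linarith)
      also have "\<dots> = ?Q $$ (i,j)"
      proof -
        have a: "N - 1 - i < N" "N - 1 - j < N" using i j by auto
        have QI: "?Q $$ (p,q) = ww N p * ww N q * X $$ (ff N p, ff N q) + sg N p * sg N q * Y $$ (ff N p, ff N q)"
          if "p < N" "q < N" for p q using that by (simp add: QQ_def)
        show ?thesis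
          by (simp only: QI[OF a] QI[OF i j] ff_sym[OF i] ff_sym[OF j] ww_sym[OF i] ww_sym[OF j] sg_sym[OF i] sg_sym[OF j] mult_minus_left mult_minus_right minus_minus)
      qed
      finally show "(rev_id_mat N * ?Q * rev_id_mat N) $$ (i,j) = ?Q $$ (i,j)" .
    qed (insert Q, auto simp: rev_id_mat_def)
  qed
  have nn: "nonneg_mat ?Q" unfolding nonneg_mat_def
  proof (intro allI impI)
    fix i j assume "i < dim_row ?Q" "j < dim_col ?Q"
    hence i: "i < N" and j: "j < N" using Q by auto
    have fi: "ff N i < N - N div 2" and fj: "ff N j < N - N div 2" using ff_lt i j by auto
    have Xij: "X $$ (ff N i, ff N j) \<ge> 0" using Xnn fi fj by auto
    have wpos: "ww N k \<ge> 0" for k unfolding ww_def by auto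
    show "?Q $$ (i,j) \<ge> 0"
    proof (cases "sg N i = 0 \<or> sg N j = 0")
      case True
      hence "?Q $$ (i,j) = ww N i * ww N j * X $$ (ff N i, ff N j)" using i j by (auto simp: QQ_def)
      thus ?thesis using Xij wpos by simp
    next
      case False
      hence si: "sg N i \<noteq> 0" and sj: "sg N j \<noteq> 0" by auto
      have fi2: "ff N i < N div 2" and fj2: "ff N j < N div 2" using ff_lt2 i j si sj by auto
      have d: "\<bar>Y $$ (ff N i, ff N j)\<bar> \<le> X $$ (ff N i, ff N j)" using dom fi2 fj2 by auto
      have wi: "ww N i = 1 / sqrt 2" and wj: "ww N j = 1 / sqrt 2" using si sj unfolding ww_def sg_def by (auto split: if_splits)
      have disj: "sg N i * sg N j = 1/2 \<or> sg N i * sg N j = - 1/2"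
        using si sj sq2 unfolding sg_def by (auto split: if_splits simp: real_div_sqrt)
      have Qij: "?Q $$ (i,j) = 1/2 * X $$ (ff N i, ff N j) + sg N i * sg N j * Y $$ (ff N i, ff N j)"
        using i j wi wj sq2 by (simp add: QQ_def)
      from disj show ?thesis
      proof
        assume h: "sg N i * sg N j = 1/2"
        show ?thesis unfolding Qij h using d by (simp add: abs_le_iff)
      next
        assume h: "sg N i * sg N j = - 1/2"
        show ?thesis unfolding Qij h using d by (simp add: abs_le_iff)
      qed
    qed
  qed
  show ?thesis using Q normal cs nn cp by auto
qed



fun gstep :: "real mat \<times> real vec \<times> real \<Rightarrow> real \<times> real \<Rightarrow> real mat \<times> real vec \<times> real" where
  "gstep (A, u, \<alpha>) (d, g) = (let r = sqrt ((d + g) * (\<alpha> + g) / (u \<bullet> u)) in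
      (glue A u r d, gvec u (r / (d + g)), \<alpha> + d + g))"

fun chain :: "real mat \<times> real vec \<times> real \<Rightarrow> (real \<times> real) list \<Rightarrow> real mat \<times> real vec \<times> real" where
  "chain S [] = S"
| "chain S (p # ps) = chain (gstep S p) ps"

lemma chain_Inv:
  assumes "Inv A m \<alpha> u P" and "\<forall>p\<in>set L. fst p \<ge> 0 \<and> snd p > 0"
    and "chain (A, u, \<alpha>) L = (X, v, \<beta>)"
  shows "Inv X (m + length L) \<beta> v (P * (\<Prod>p\<leftarrow>L. [:complex_of_real (snd p), 1:]))
     \<and> \<beta> = \<alpha> + (\<Sum>p\<leftarrow>L. fst p + snd p)
     \<and> (\<forall>i<m. \<forall>j<m. X $$ (i,j) = A $$ (i,j))
     \<and> (\<forall>k<length L. X $$ (m + k, m + k) = fst (L ! k))"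
  using assms
proof (induction L arbitrary: A m \<alpha> u P)
  case Nil thus ?case by simp
next
  case (Cons p L)
  obtain d g where p: "p = (d, g)" by (cases p)
  have d: "d \<ge> 0" and g: "g > 0" using Cons.prems(2) p by auto
  define r where "r = sqrt ((d + g) * (\<alpha> + g) / (u \<bullet> u))"
  have gs: "gstep (A, u, \<alpha>) p = (glue A u r d, gvec u (r / (d + g)), \<alpha> + d + g)"
    unfolding p r_def by (simp add: Let_def)
  have I1: "Inv (glue A u r d) (Suc m) (\<alpha> + d + g) (gvec u (r / (d + g))) (P * [:complex_of_real g, 1:])"
    by (rule Inv_step[OF Cons.prems(1) d g r_def])
  have A: "A \<in> carrier_mat m m" using Cons.prems(1) unfolding Inv_def by auto
  have ch: "chain (glue A u r d, gvec u (r / (d + g)), \<alpha> + d + g) L = (X, v, \<beta>)"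
    using Cons.prems(3) gs by simp
  have IH: "Inv X (Suc m + length L) \<beta> v (P * [:complex_of_real g, 1:] * (\<Prod>p\<leftarrow>L. [:complex_of_real (snd p), 1:]))
     \<and> \<beta> = \<alpha> + d + g + (\<Sum>p\<leftarrow>L. fst p + snd p)
     \<and> (\<forall>i<Suc m. \<forall>j<Suc m. X $$ (i,j) = glue A u r d $$ (i,j))
     \<and> (\<forall>k<length L. X $$ (Suc m + k, Suc m + k) = fst (L ! k))"
    by (rule Cons.IH[OF I1 _ ch], insert Cons.prems(2), auto)
  show ?case
  proof (intro conjI)
    show "Inv X (m + length (p # L)) \<beta> v (P * (\<Prod>p\<leftarrow>p # L. [:complex_of_real (snd p), 1:]))"
    proof -
      have e: "P * (\<Prod>p\<leftarrow>p # L. [:complex_of_real (snd p), 1:]) = P * [:complex_of_real g, 1:] * (\<Prod>p\<leftarrow>L. [:complex_of_real (snd p), 1:])"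
        by (simp only: p list.map prod_list.Cons snd_conv mult.assoc)
      have e2: "m + length (p # L) = Suc m + length L" by simp
      show ?thesis unfolding e e2 using IH by blast
    qed
    show "\<beta> = \<alpha> + (\<Sum>p\<leftarrow>p # L. fst p + snd p)" using IH p by simp
    show "\<forall>i<m. \<forall>j<m. X $$ (i,j) = A $$ (i,j)"
      using IH by (auto simp: glue_index[OF A])
    show "\<forall>k<length (p # L). X $$ (m + k, m + k) = fst ((p # L) ! k)"
    proof (intro allI impI)
      fix k assume k: "k < length (p # L)"
      show "X $$ (m + k, m + k) = fst ((p # L) ! k)"
      proof (cases k)
        case 0 thus ?thesis using IH p by (simp add: glue_index[OF A])
      next
        case (Suc k')
        thus ?thesis using IH k by auto
      qed
    qed
  qed
qed



lemma prod_pairs: fixes f :: "nat \<Rightarrow> 'a::comm_monoid_mult"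
  shows "(\<Prod>k<r. f (2*k+2) * f (2*k+3)) = prod f {2..<2*r+2}"
proof (induction r)
  case 0 thus ?case by simp
next
  case (Suc r)
  have "{2..<2 * Suc r + 2} = insert (2*r+3) (insert (2*r+2) {2..<2*r+2})" by auto
  hence "prod f {2..<2 * Suc r + 2} = f (2*r+3) * (f (2*r+2) * prod f {2..<2*r+2})" by simp
  thus ?case using Suc by (simp add: ac_simps)
qed

lemma sum_pairs: fixes f :: "nat \<Rightarrow> 'a::comm_monoid_add"
  shows "(\<Sum>k<r. f (2*k+2) + f (2*k+3)) = sum f {2..<2*r+2}"
proof (induction r)
  case 0 thus ?case by simp
next
  case (Suc r)
  have "{2..<2 * Suc r + 2} = insert (2*r+3) (insert (2*r+2) {2..<2*r+2})" by auto
  hence "sum f {2..<2 * Suc r + 2} = f (2*r+3) + (f (2*r+2) + sum f {2..<2*r+2})" by simp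
  thus ?case using Suc by (simp add: ac_simps)
qed

lemma prod_list_upt: fixes f :: "nat \<Rightarrow> 'a::comm_monoid_mult"
  shows "prod_list (map f [a..<b]) = prod f {a..<b}"
  by (induct b) (auto simp: mult.commute)

lemma split_1_2s: fixes f :: "nat \<Rightarrow> 'a::comm_monoid_mult"
  shows "prod f {1..<2*s+1} = prod f {1..s} * (\<Prod>k\<in>{1..s}. f (s + k))"
proof -
  have "{1..<2*s+1} = {1..s} \<union> {s+1..2*s}" by auto
  hence "prod f {1..<2*s+1} = prod f {1..s} * prod f {s+1..2*s}" by (simp add: prod.union_disjoint)
  also have "prod f {s+1..2*s} = (\<Prod>k\<in>{1..s}. f (s + k))"
    by (rule prod.reindex_bij_witness[of _ "\<lambda>k. s + k" "\<lambda>k. k - s"], auto)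
  finally show ?thesis .
qed

lemma sum_split_1_2s: fixes f :: "nat \<Rightarrow> 'a::comm_monoid_add"
  shows "sum f {1..2*s} = sum f {1..s} + (\<Sum>k\<in>{1..s}. f (s + k))"
proof -
  have "{1..2*s} = {1..s} \<union> {s+1..2*s}" by auto
  hence "sum f {1..2*s} = sum f {1..s} + sum f {s+1..2*s}" by (simp add: sum.union_disjoint)
  also have "sum f {s+1..2*s} = (\<Sum>k\<in>{1..s}. f (s + k))"
    by (rule sum.reindex_bij_witness[of _ "\<lambda>k. s + k" "\<lambda>k. k - s"], auto)
  finally show ?thesis .
qed

lemma lam_neg:
  fixes lam :: "nat \<Rightarrow> real"
  assumes "0 > lam 1" and "\<And>j. 1 \<le> j \<Longrightarrow> j < n \<Longrightarrow> lam j \<ge> lam (Suc j)"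
  shows "1 \<le> j \<Longrightarrow> j \<le> n \<Longrightarrow> lam j < 0"
proof (induction j)
  case 0 thus ?case by simp
next
  case (Suc j)
  show ?case
  proof (cases "j = 0")
    case True thus ?thesis using assms(1) by simp
  next
    case False
    hence "lam j < 0" using Suc by simp
    moreover have "lam (Suc j) \<le> lam j" using assms(2)[of j] False Suc by simp
    ultimately show ?thesis by simp
  qed
qed


theorem theorem3p11:
  fixes n s :: nat and lam :: "nat \<Rightarrow> real" and z :: "nat \<Rightarrow> complex"
  assumes "n \<ge> 1" and "s \<ge> 1"
    and "lam 0 \<ge> 0" and "0 > lam 1"
    and "\<And>j. 1 \<le> j \<Longrightarrow> j < n \<Longrightarrow> lam j \<ge> lam (Suc j)"
    and "\<And>j. 1 \<le> j \<Longrightarrow> j \<le> 2 * s \<Longrightarrow> Im (z j) > 0"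
    and "lam 0 + (\<Sum>j = 1..n. lam j) - 2 * (\<Sum>j = 1..2 * s. cmod (z j)) \<ge> 0"
  shows "\<exists>Q :: real mat. Q \<in> carrier_mat (n + 4 * s + 1) (n + 4 * s + 1)
           \<and> normal_real_mat Q \<and> centrosymmetric Q \<and> nonneg_mat Q
           \<and> has_eigenvalue_list Q
               (map (\<lambda>j. complex_of_real (lam j)) [0..<n+1]
                @ map z [1..<2*s+1] @ map (\<lambda>j. cnj (z j)) [1..<2*s+1])"
proof -
  note n1 = assms(1) and l1 = assms(4) and mono = assms(5) and budget = assms(7)
  define c where "c = 2 * s + 1"
  define r where "r = (n - 1) div 2"
  define L1 where "L1 = map (\<lambda>k. (- lam (2*k+2), - lam (2*k+3))) [0..<r]"
  define L2 where "L2 = (if even n then [(0::real, - lam n)] else [])"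
  define L where "L = L1 @ L2"
  define N where "N = n + 4 * s + 1"
  define \<beta> where "\<beta> = lam 0 - (\<Sum>p\<leftarrow>L. fst p + snd p)"
  define z2 where "z2 = (\<lambda>k. z (s + k))"
  define A0 where "A0 = circ c \<beta> s z"
  define u0 where "u0 = vec c (\<lambda>_. 1 :: real)"
  have neg: "lam j < 0" if "1 \<le> j" "j \<le> n" for j
    by (rule lam_neg[OF l1 mono that])
  have cpos: "c > 0" unfolding c_def by simp
  have par: "(even n \<and> n = 2*r+2) \<or> (odd n \<and> n = 2*r+1)" using n1 unfolding r_def by presburger
  have rn: "2 * r + 1 \<le> n" using par by auto
  have lenL: "length L = r + (if even n then 1 else 0)" unfolding L_def L1_def L2_def by simp
  have Nd: "N div 2 = c + r" and Nm: "N - N div 2 = c + length L"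
    using par unfolding lenL N_def c_def by auto
  have Lprops: "\<forall>p\<in>set L. fst p \<ge> 0 \<and> snd p > 0"
  proof
    fix p assume "p \<in> set L"
    then consider k where "k < r" "p = (- lam (2*k+2), - lam (2*k+3))" | "even n" "p = (0, - lam n)"
      unfolding L_def L1_def L2_def by (auto split: if_splits)
    thus "fst p \<ge> 0 \<and> snd p > 0"
    proof cases
      case 1
      have "lam (2*k+2) < 0" "lam (2*k+3) < 0" using neg 1 rn by auto
      thus ?thesis using 1 by simp
    next
      case 2 thus ?thesis using neg n1 by simp
    qed
  qed
  have sumL1: "(\<Sum>p\<leftarrow>L1. fst p + snd p) = - (\<Sum>j\<in>{2..<2*r+2}. lam j)"
  proof -
    have "(\<Sum>p\<leftarrow>L1. fst p + snd p) = (\<Sum>k<r. - (lam (2*k+2) + lam (2*k+3)))"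
      unfolding L1_def by (simp add: interv_sum_list_conv_sum_set_nat lessThan_atLeast0 o_def)
    also have "\<dots> = - (\<Sum>k<r. lam (2*k+2) + lam (2*k+3))" by (simp only: sum_negf)
    also have "(\<Sum>k<r. lam (2*k+2) + lam (2*k+3)) = (\<Sum>j\<in>{2..<2*r+2}. lam j)" by (rule sum_pairs)
    finally show ?thesis .
  qed
  have sumL: "(\<Sum>p\<leftarrow>L. fst p + snd p) = - (\<Sum>j\<in>{2..n}. lam j)"
  proof (cases "even n")
    case True
    hence n2: "n = 2*r+2" using par by auto
    have "{2..n} = insert n {2..<2*r+2}" using n2 by auto
    hence "(\<Sum>j\<in>{2..n}. lam j) = lam n + (\<Sum>j\<in>{2..<2*r+2}. lam j)" using n2 by simp
    thus ?thesis unfolding L_def using sumL1 True by (simp add: L2_def)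
  next
    case False
    hence n2: "n = 2*r+1" using par by auto
    have "{2..n} = {2..<2*r+2}" using n2 by auto
    thus ?thesis unfolding L_def using sumL1 False by (simp add: L2_def)
  qed
  have prodL: "(\<Prod>p\<leftarrow>L. [:complex_of_real (snd p), 1:]) * (\<Prod>k<r. [:- complex_of_real (lam (2*k+2)), 1:])
      = (\<Prod>j\<in>{2..n}. [:- complex_of_real (lam j), 1:])"
  proof -
    define f where "f = (\<lambda>j. [:- complex_of_real (lam j), 1:])"
    have pL1: "(\<Prod>p\<leftarrow>L1. [:complex_of_real (snd p), 1:]) = (\<Prod>k<r. f (2*k+3))"
      unfolding L1_def f_def by (simp add: prod_list_upt lessThan_atLeast0 o_def)
    have pL2: "(\<Prod>p\<leftarrow>L2. [:complex_of_real (snd p), 1:]) = (if even n then f n else 1)"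
      unfolding L2_def f_def by simp
    have "(\<Prod>p\<leftarrow>L. [:complex_of_real (snd p), 1:]) * (\<Prod>k<r. [:- complex_of_real (lam (2*k+2)), 1:])
        = (\<Prod>k<r. f (2*k+2) * f (2*k+3)) * (if even n then f n else 1)"
    proof -
      have pk: "(\<Prod>k<r. [:- complex_of_real (lam (2*k+2)), 1:]) = (\<Prod>k<r. f (2*k+2))" by (simp add: f_def)
      have pL: "(\<Prod>p\<leftarrow>L. [:complex_of_real (snd p), 1:]) = (\<Prod>k<r. f (2*k+3)) * (if even n then f n else 1)"
        unfolding L_def map_append prod_list.append pL1 pL2 ..
      show ?thesis unfolding pk pL by (simp add: prod.distrib ac_simps)
    qed
    also have "(\<Prod>k<r. f (2*k+2) * f (2*k+3)) = prod f {2..<2*r+2}" by (rule prod_pairs)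
    also have "prod f {2..<2*r+2} * (if even n then f n else 1) = prod f {2..n}"
    proof (cases "even n")
      case True
      hence n2: "n = 2*r+2" using par by auto
      have "{2..n} = insert n {2..<2*r+2}" using n2 by auto
      thus ?thesis using True n2 by (simp add: mult.commute)
    next
      case False
      hence n2: "n = 2*r+1" using par by auto
      have "{2..n} = {2..<2*r+2}" using n2 by auto
      thus ?thesis using False by simp
    qed
    finally show ?thesis unfolding f_def .
  qed
  have n1': "{1..n} = insert 1 {2..n}" using n1 by auto
  have sz: "(\<Sum>j = 1..2 * s. cmod (z j)) = (\<Sum>k\<in>{1..s}. cmod (z k)) + (\<Sum>k\<in>{1..s}. cmod (z2 k))"
    unfolding z2_def by (rule sum_split_1_2s)
  have sl: "(\<Sum>j = 1..n. lam j) = lam 1 + (\<Sum>j\<in>{2..n}. lam j)" unfolding n1' by simp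
  have betaeq: "\<beta> = lam 0 + (\<Sum>j\<in>{2..n}. lam j)" unfolding \<beta>_def sumL by simp
  have bud: "\<beta> - 2 * (\<Sum>k\<in>{1..s}. cmod (z k)) \<ge> \<bar>lam 1\<bar> + 2 * (\<Sum>k\<in>{1..s}. cmod (z2 k))"
    using budget unfolding sz sl betaeq using l1 by simp
  have z2nn: "(\<Sum>k\<in>{1..s}. cmod (z2 k)) \<ge> 0" by (simp add: sum_nonneg)
  have z1nn: "(\<Sum>k\<in>{1..s}. cmod (z k)) \<ge> 0" by (simp add: sum_nonneg)
  have bnn: "\<beta> - 2 * (\<Sum>k\<in>{1..s}. cmod (z k)) \<ge> 0" using bud z2nn by linarith
  hence bnn': "\<beta> \<ge> 0" using z1nn by linarith
  define P0 where "P0 = (\<Prod>k\<in>{1..s}. [:- z k, 1:] * [:- cnj (z k), 1:])"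
  have A0c: "A0 \<in> carrier_mat c c" unfolding A0_def by simp
  have u0c: "u0 \<in> carrier_vec c" unfolding u0_def by simp
  have base: "Inv A0 c \<beta> u0 P0"
    unfolding Inv_def
  proof (intro conjI)
    show "A0 \<in> carrier_mat c c" by (rule A0c)
    show "u0 \<in> carrier_vec c" by (rule u0c)
    show "\<forall>i<c. \<forall>j<c. 0 \<le> A0 $$ (i, j)"
    proof (intro allI impI)
      fix i j assume i: "i < c" and j: "j < c"
      have "0 \<le> (\<beta> - 2 * (\<Sum>k\<in>{1..s}. cmod (z k))) / real c" using bnn by simp
      also have "\<dots> \<le> A0 $$ (i,j)" unfolding A0_def by (rule circ_lower[OF i j])
      finally show "0 \<le> A0 $$ (i, j)" .
    qed
    show "\<forall>i<c. 0 \<le> u0 $ i" unfolding u0_def by simp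
    show "0 < u0 \<bullet> u0" unfolding u0_def using cpos by (simp add: scalar_prod_def)
    show "0 \<le> \<beta>" by (rule bnn')
    show "A0 * transpose_mat A0 = transpose_mat A0 * A0" unfolding A0_def by (rule circ_normal[OF c_def])
    show "A0 *\<^sub>v u0 = \<beta> \<cdot>\<^sub>v u0" unfolding A0_def u0_def by (rule circ_ones[OF c_def])
    show "transpose_mat A0 *\<^sub>v u0 = \<beta> \<cdot>\<^sub>v u0" unfolding A0_def u0_def circ_transpose by (rule circ_ones[OF c_def])
    show "char_poly (map_mat complex_of_real A0) = [:- complex_of_real \<beta>, 1:] * P0"
      unfolding A0_def P0_def by (rule circ_char_poly[OF c_def])
  qed
  obtain X v \<alpha>' where ch: "chain (A0, u0, \<beta>) L = (X, v, \<alpha>')" by (metis prod_cases3)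
  from chain_Inv[OF base Lprops ch] have IX: "Inv X (c + length L) \<alpha>' v (P0 * (\<Prod>p\<leftarrow>L. [:complex_of_real (snd p), 1:]))"
    and al: "\<alpha>' = \<beta> + (\<Sum>p\<leftarrow>L. fst p + snd p)"
    and ent1: "\<forall>i<c. \<forall>j<c. X $$ (i,j) = A0 $$ (i,j)"
    and ent2: "\<forall>k<length L. X $$ (c + k, c + k) = fst (L ! k)" by auto
  have al0: "\<alpha>' = lam 0" unfolding al \<beta>_def by simp
  have X: "X \<in> carrier_mat (c + length L) (c + length L)" and XN: "X * transpose_mat X = transpose_mat X * X"
    and Xnn: "\<forall>i<c + length L. \<forall>j<c + length L. X $$ (i,j) \<ge> 0"
    and cX: "char_poly (map_mat complex_of_real X) = [:- complex_of_real (lam 0), 1:] * (P0 * (\<Prod>p\<leftarrow>L. [:complex_of_real (snd p), 1:]))"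
    using IX unfolding Inv_def al0 by auto
  define Yc where "Yc = circ c (lam 1) s z2"
  define Yd where "Yd = mat r r (\<lambda>(i,j). if i = j then lam (2*i+2) else 0)"
  define Y where "Y = DD Yc Yd"
  have Ycc: "Yc \<in> carrier_mat c c" unfolding Yc_def by simp
  have Ydc: "Yd \<in> carrier_mat r r" unfolding Yd_def by simp
  have Yc': "Y \<in> carrier_mat (c + r) (c + r)" unfolding Y_def using Ycc Ydc by simp
  have YdT: "transpose_mat Yd = Yd" unfolding Yd_def by (rule eq_matI) auto
  have YN: "Y * transpose_mat Y = transpose_mat Y * Y"
    unfolding Y_def by (rule DD_normal[OF Ycc Ydc], unfold Yc_def YdT, rule circ_normal[OF c_def], rule refl)
  have dom: "\<forall>i<N div 2. \<forall>j<N div 2. \<bar>Y $$ (i,j)\<bar> \<le> X $$ (i,j)"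
  proof (intro allI impI)
    fix i j assume "i < N div 2" "j < N div 2"
    hence i: "i < c + r" and j: "j < c + r" unfolding Nd by auto
    have iL: "i < c + length L" and jL: "j < c + length L" using i j lenL by auto
    have Yent: "Y $$ (i,j) = (if i < c \<and> j < c then Yc $$ (i,j) else if c \<le> i \<and> c \<le> j then Yd $$ (i - c, j - c) else 0)"
      unfolding Y_def DD_def using i j Ycc Ydc by auto
    show "\<bar>Y $$ (i,j)\<bar> \<le> X $$ (i,j)"
    proof (cases "i < c \<and> j < c")
      case True
      hence ic: "i < c" and jc: "j < c" by auto
      have "\<bar>Y $$ (i,j)\<bar> = \<bar>Yc $$ (i,j)\<bar>" using Yent True by simp
      also have "\<dots> \<le> (\<bar>lam 1\<bar> + 2 * (\<Sum>k\<in>{1..s}. cmod (z2 k))) / real c" unfolding Yc_def by (rule circ_abs[OF ic jc])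
      also have "\<dots> \<le> (\<beta> - 2 * (\<Sum>k\<in>{1..s}. cmod (z k))) / real c" using bud cpos by (simp add: divide_right_mono)
      also have "\<dots> \<le> A0 $$ (i,j)" unfolding A0_def by (rule circ_lower[OF ic jc])
      also have "\<dots> = X $$ (i,j)" using ent1 ic jc by simp
      finally show ?thesis .
    next
      case False
      show ?thesis
      proof (cases "c \<le> i \<and> c \<le> j \<and> i = j")
        case True
        define k where "k = i - c"
        have k: "k < r" and ik: "i = c + k" and jk: "j = c + k" using True i unfolding k_def by auto
        have Yk: "Y $$ (i,j) = lam (2*k+2)" using Yent True False k unfolding k_def Yd_def by auto
        have Lk: "L ! k = (- lam (2*k+2), - lam (2*k+3))"
          unfolding L_def L1_def using k by (simp add: nth_append)
        have Xk: "X $$ (i,j) = - lam (2*k+2)" using ent2 Lk k lenL unfolding ik jk by auto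
        have "lam (2*k+2) < 0" using neg[of "2*k+2"] k rn by auto
        thus ?thesis using Yk Xk by simp
      next
        case False2: False
        have "Y $$ (i,j) = 0" using Yent False False2 Ydc i j unfolding Yd_def by auto
        thus ?thesis using Xnn iL jL by simp
      qed
    qed
  qed
  have XnnN: "\<forall>i<N - N div 2. \<forall>j<N - N div 2. X $$ (i,j) \<ge> 0" using Xnn unfolding Nm .
  have XcN: "X \<in> carrier_mat (N - N div 2) (N - N div 2)" using X unfolding Nm .
  have YcN: "Y \<in> carrier_mat (N div 2) (N div 2)" using Yc' unfolding Nd .
  from assemble[OF XcN YcN XN YN XnnN dom]
  have Qp: "QQ N X Y \<in> carrier_mat N N" "normal_real_mat (QQ N X Y)" "centrosymmetric (QQ N X Y)" "nonneg_mat (QQ N X Y)"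
    and cQ: "char_poly (map_mat complex_of_real (QQ N X Y)) = char_poly (map_mat complex_of_real X) * char_poly (map_mat complex_of_real Y)"
    by auto
  have "has_eigenvalue_list (QQ N X Y)
               (map (\<lambda>j. complex_of_real (lam j)) [0..<n+1]
                @ map z [1..<2*s+1] @ map (\<lambda>j. cnj (z j)) [1..<2*s+1])"
  proof -
    define g where "g = (\<lambda>j. [:- complex_of_real (lam j), 1:])"
    define R where "R = prod g {2..n}"
    define Zs1 where "Zs1 = (\<Prod>k\<in>{1..s}. [:- z k, 1:])"
    define Cs1 where "Cs1 = (\<Prod>k\<in>{1..s}. [:- cnj (z k), 1:])"
    define Zs2 where "Zs2 = (\<Prod>k\<in>{1..s}. [:- z2 k, 1:])"
    define Cs2 where "Cs2 = (\<Prod>k\<in>{1..s}. [:- cnj (z2 k), 1:])"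
    define G where "G = (\<Prod>p\<leftarrow>L. [:complex_of_real (snd p), 1:])"
    define D where "D = (\<Prod>k<r. [:- complex_of_real (lam (2*k+2)), 1:])"
    have GD: "G * D = R" unfolding G_def D_def R_def g_def by (rule prodL)
    have P0e: "P0 = Zs1 * Cs1" unfolding P0_def Zs1_def Cs1_def by (rule prod.distrib)
    have mYd: "map_mat complex_of_real Yd = Dm r (\<lambda>k. complex_of_real (lam (2*k+2)))"
      unfolding Yd_def Dm_def by (rule eq_matI) auto
    have cYc: "char_poly (map_mat complex_of_real Yc) = g 1 * (Zs2 * Cs2)"
      unfolding Yc_def circ_char_poly[OF c_def] g_def Zs2_def Cs2_def prod.distrib ..
    have cYd: "char_poly (map_mat complex_of_real Yd) = D"
      unfolding mYd char_poly_Dm D_def ..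
    have cY: "char_poly (map_mat complex_of_real Y) = g 1 * (Zs2 * Cs2) * D"
      unfolding Y_def map_DD[OF Ycc Ydc] cYc[symmetric] cYd[symmetric]
      by (rule char_poly_DD, insert Ycc Ydc, auto)
    have cX': "char_poly (map_mat complex_of_real X) = g 0 * (Zs1 * Cs1 * G)"
      unfolding cX P0e G_def g_def ..
    have T1: "(\<Prod>a\<leftarrow>map (\<lambda>j. complex_of_real (lam j)) [0..<n+1]. [:- a, 1:]) = g 0 * (g 1 * R)"
    proof -
      have "(\<Prod>a\<leftarrow>map (\<lambda>j. complex_of_real (lam j)) [0..<n+1]. [:- a, 1:]) = prod g {0..<n+1}"
        unfolding map_map o_def g_def by (rule prod_list_upt)
      also have "{0..<n+1} = insert 0 (insert 1 {2..n})" using n1 by auto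
      finally show ?thesis unfolding R_def by simp
    qed
    have T2: "(\<Prod>a\<leftarrow>map z [1..<2*s+1]. [:- a, 1:]) = Zs1 * Zs2"
      unfolding map_map o_def prod_list_upt split_1_2s Zs1_def Zs2_def z2_def ..
    have T3: "(\<Prod>a\<leftarrow>map (\<lambda>j. cnj (z j)) [1..<2*s+1]. [:- a, 1:]) = Cs1 * Cs2"
      unfolding map_map o_def prod_list_upt split_1_2s Cs1_def Cs2_def z2_def ..
    show ?thesis unfolding has_eigenvalue_list_def cQ cX' cY map_append prod_list.append T1 T2 T3 R_def[symmetric] GD[symmetric]
      by (simp only: mult.assoc mult.commute mult.left_commute)
  qed
  thus ?thesis using Qp unfolding N_def by blast
qed


end
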